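(* Assume (H1)–(H9) with (H7) in the form (H7-$\varepsilon$) (resp. (H7-WFL)), as described in the context, and let $\mu>\overline A$. Then there exist a decreasing family of events $\Omega_0^\varepsilon\subseteq\Omega_1^\varepsilon$ with $P(\Omega_0^\varepsilon)=1-\theta(\varepsilon)$, $\theta(\varepsilon)\to0$ as $\varepsilon\to0$ (resp. an event $\Omega_0$ of full probability), and a function $\overline m_\mu:\mathbb R\times\mathbb R\to[0,+\infty)$ such that for every $\omega\in\Omega_0^\varepsilon$ (resp. $\omega\in\Omega_0$) and all $x,y\in\mathbb R$, $$\frac{m_\mu(ty,tx,\omega)}{t}\to\overline m_\mu(y,x)\quad\text{as }t\to\infty.$$
   Context: $(\Omega,\mathbf F,P)$ probability space; $H:\mathbb R\times\mathbb R\times\Omega\to\mathbb R$ measurable; for Borel $V$, $\mathbf F(V)$ is the $\sigma$-algebra generated by $\omega\mapsto H(p,y,\omega)$, $y\in V$, $p\in\mathbb R$. $(\tau_z)$ is an ergodic group of measure-preserving maps of $\Omega$. (H1) $H$ Lipschitz in $p$ uniformly in $(y,\omega)$. (H2) $-c_0|p+\gamma|\le H\le C_0|p+\gamma|$. (H3) $\lim_{|p|\to\infty}\inf_{(y,\omega)}H=+\infty$. (H4) $|H(p,y,\omega)-H(p,x,\omega)|\le w(|x-y|(1+|p|))$. (H5) $H$ convex in $p$. (H6) $H(p,y,\omega)\ge H(0,y,\omega)$. (H7-WFL) $H=\phi(y)H_L+(1-\phi(y))H_R$, $\phi\in C^\infty$ non-increasing, $\phi=1$ on $(-\infty,-1]$,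 $0$ on $[1,\infty)$; or (H7-$\varepsilon$) $H_0\ge H_L,H_R$ and $H=\psi_1^\varepsilon(-y)H_L+H_0(1-\psi_1^\varepsilon(-y))(1-\psi_1^\varepsilon(y))+\psi_1^\varepsilon(y)H_R$, $\psi_1^\varepsilon\in C^\infty$, $=1$ for $y>2/\sqrt\varepsilon$, $=0$ for $y<1/\sqrt\varepsilon$. (H8) $H_\alpha(p,y+z,\omega)=H_\alpha(p,y,\tau_z\omega)$, $\alpha\in\{L,R,0\}$. (H9) $\mathbf F(U),\mathbf F(V)$ independent if $d(U,V)\ge1$. Let $\mu^\star_\alpha$ be the a.s. constant $\inf\{\mu:\exists v$ globally Lipschitz, $H_\alpha(Dv,y,\omega)\le\mu$ in $\mathbb R\}$. Under (H7-WFL), $\overline A=\max(\mu^\star_L,\mu^\star_R)$; under (H7-$\varepsilon$), $\overline A=\mu^\star_0$, and $\Omega_1^\varepsilon$ denotes a decreasing family of events with $P(\Omega_1^\varepsilon)\to1$ on which $\tilde A(\omega)=\overline A$, where $\tilde A(\omega)=\inf\{\mu:\exists v$ globally Lipschitz, $H(Dv,y,\omega)\le\mu$ in $\mathbb R\}$. The metric function is $m_\mu(y,x,\omega)=\sup\{v(y)-v(x):\ v$ globally Lipschitz, $H(Dv,z,\omega)\le\mu$ in $\mathbb R$ (viscosity sense)$\}$. *)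

theory Defs
  imports "HOL-Analysis.Analysis" "HOL-Probability.Probability"
begin

(* A Hamiltonian is a map  Hf :: real => real => 'a => real,  (p, y, omega) |-> Hf p y omega. *)

definition glob_lip :: "(real \<Rightarrow> real) \<Rightarrow> bool" where
  "glob_lip v \<longleftrightarrow> (\<exists>L. L-lipschitz_on UNIV v)"

definition visc_sub :: "(real \<Rightarrow> real \<Rightarrow> real) \<Rightarrow> (real \<Rightarrow> real) \<Rightarrow> real \<Rightarrow> bool" where
  "visc_sub F v mu \<longleftrightarrow> continuous_on UNIV v \<and>
     (\<forall>\<phi> \<phi>' y0. (\<forall>y. (\<phi> has_real_derivative \<phi>' y) (at y)) \<and> continuous_on UNIV \<phi>' \<and>
        (\<exists>e>0. \<forall>y. \<bar>y - y0\<bar> < e \<longrightarrow> v y - \<phi> y \<le> v y0 - \<phi> y0)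
        \<longrightarrow> F (\<phi>' y0) y0 \<le> mu)"

definition subsols :: "(real \<Rightarrow> real \<Rightarrow> 'a \<Rightarrow> real) \<Rightarrow> real \<Rightarrow> 'a \<Rightarrow> (real \<Rightarrow> real) set" where
  "subsols Hf mu \<omega> = {v. glob_lip v \<and> visc_sub (\<lambda>p y. Hf p y \<omega>) v mu}"

definition Atilde :: "(real \<Rightarrow> real \<Rightarrow> 'a \<Rightarrow> real) \<Rightarrow> 'a \<Rightarrow> real" where
  "Atilde Hf \<omega> = Inf {mu. subsols Hf mu \<omega> \<noteq> {}}"

definition mu_star :: "'a measure \<Rightarrow> (real \<Rightarrow> real \<Rightarrow> 'a \<Rightarrow> real) \<Rightarrow> real" where
  "mu_star M Hf = (THE c. AE \<omega> in M. Atilde Hf \<omega> = c)"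

definition metric_fn :: "real \<Rightarrow> (real \<Rightarrow> real \<Rightarrow> 'a \<Rightarrow> real) \<Rightarrow> real \<Rightarrow> real \<Rightarrow> 'a \<Rightarrow> real" where
  "metric_fn mu Hf y x \<omega> = Sup {v y - v x | v. v \<in> subsols Hf mu \<omega>}"

definition Fsig :: "'a measure \<Rightarrow> (real \<Rightarrow> real \<Rightarrow> 'a \<Rightarrow> real) \<Rightarrow> real set \<Rightarrow> 'a set set" where
  "Fsig M Hf V = sigma_sets (space M)
     (\<Union>p. \<Union>y\<in>V. {(\<lambda>\<omega>. Hf p y \<omega>) -` B \<inter> space M | B. B \<in> sets borel})"

definition ergodic_group :: "'a measure \<Rightarrow> (real \<Rightarrow> 'a \<Rightarrow> 'a) \<Rightarrow> bool" where
  "ergodic_group M \<tau> \<longleftrightarrow>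
     (\<forall>\<omega>\<in>space M. \<tau> 0 \<omega> = \<omega>) \<and>
     (\<forall>z w. \<forall>\<omega>\<in>space M. \<tau> (z + w) \<omega> = \<tau> z (\<tau> w \<omega>)) \<and>
     (\<forall>z. \<tau> z \<in> measurable M M \<and>
          (\<forall>A\<in>sets M. measure M (\<tau> z -` A \<inter> space M) = measure M A)) \<and>
     (\<forall>A\<in>sets M. (\<forall>z. \<tau> z -` A \<inter> space M = A) \<longrightarrow> measure M A = 0 \<or> measure M A = 1)"

definition H_meas :: "'a measure \<Rightarrow> (real \<Rightarrow> real \<Rightarrow> 'a \<Rightarrow> real) \<Rightarrow> bool" where
  "H_meas M Hf \<longleftrightarrow> (\<lambda>(py, \<omega>). Hf (fst py) (snd py) \<omega>) \<in> borel_measurable ((borel :: (real \<times> real) measure) \<Otimes>\<^sub>M M)"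

definition H1 :: "'a measure \<Rightarrow> (real \<Rightarrow> real \<Rightarrow> 'a \<Rightarrow> real) \<Rightarrow> bool" where
  "H1 M Hf \<longleftrightarrow> (\<exists>L. \<forall>p q y. \<forall>\<omega>\<in>space M. \<bar>Hf p y \<omega> - Hf q y \<omega>\<bar> \<le> L * \<bar>p - q\<bar>)"

definition H2 :: "'a measure \<Rightarrow> (real \<Rightarrow> real \<Rightarrow> 'a \<Rightarrow> real) \<Rightarrow> bool" where
  "H2 M Hf \<longleftrightarrow> (\<exists>c0 C0 \<gamma>. c0 > 0 \<and> C0 > 0 \<and> (\<forall>p y. \<forall>\<omega>\<in>space M.
      - c0 * \<bar>p + \<gamma>\<bar> \<le> Hf p y \<omega> \<and> Hf p y \<omega> \<le> C0 * \<bar>p + \<gamma>\<bar>))"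

definition H3 :: "'a measure \<Rightarrow> (real \<Rightarrow> real \<Rightarrow> 'a \<Rightarrow> real) \<Rightarrow> bool" where
  "H3 M Hf \<longleftrightarrow> (\<forall>K. \<exists>R. \<forall>p y. \<forall>\<omega>\<in>space M. \<bar>p\<bar> \<ge> R \<longrightarrow> Hf p y \<omega> \<ge> K)"

definition modulus :: "(real \<Rightarrow> real) \<Rightarrow> bool" where
  "modulus w \<longleftrightarrow> continuous_on {0..} w \<and> mono_on {0..} w \<and> w 0 = 0 \<and> (\<forall>r\<ge>0. w r \<ge> 0)"

definition H4 :: "'a measure \<Rightarrow> (real \<Rightarrow> real \<Rightarrow> 'a \<Rightarrow> real) \<Rightarrow> bool" where
  "H4 M Hf \<longleftrightarrow> (\<exists>w. modulus w \<and> (\<forall>p x y. \<forall>\<omega>\<in>space M.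
      \<bar>Hf p y \<omega> - Hf p x \<omega>\<bar> \<le> w (\<bar>x - y\<bar> * (1 + \<bar>p\<bar>))))"

definition H5 :: "'a measure \<Rightarrow> (real \<Rightarrow> real \<Rightarrow> 'a \<Rightarrow> real) \<Rightarrow> bool" where
  "H5 M Hf \<longleftrightarrow> (\<forall>y. \<forall>\<omega>\<in>space M. convex_on UNIV (\<lambda>p. Hf p y \<omega>))"

definition H6 :: "'a measure \<Rightarrow> (real \<Rightarrow> real \<Rightarrow> 'a \<Rightarrow> real) \<Rightarrow> bool" where
  "H6 M Hf \<longleftrightarrow> (\<forall>p y. \<forall>\<omega>\<in>space M. Hf p y \<omega> \<ge> Hf 0 y \<omega>)"

definition H1to6 :: "'a measure \<Rightarrow> (real \<Rightarrow> real \<Rightarrow> 'a \<Rightarrow> real) \<Rightarrow> bool" where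
  "H1to6 M Hf \<longleftrightarrow> H_meas M Hf \<and> H1 M Hf \<and> H2 M Hf \<and> H3 M Hf \<and> H4 M Hf \<and> H5 M Hf \<and> H6 M Hf"

definition H8 :: "'a measure \<Rightarrow> (real \<Rightarrow> 'a \<Rightarrow> 'a) \<Rightarrow> (real \<Rightarrow> real \<Rightarrow> 'a \<Rightarrow> real) \<Rightarrow> bool" where
  "H8 M \<tau> Hf \<longleftrightarrow> (\<forall>p y z. \<forall>\<omega>\<in>space M. Hf p (y + z) \<omega> = Hf p y (\<tau> z \<omega>))"

definition H9 :: "'a measure \<Rightarrow> (real \<Rightarrow> real \<Rightarrow> 'a \<Rightarrow> real) \<Rightarrow> bool" where
  "H9 M Hf \<longleftrightarrow> (\<forall>U V. U \<in> sets borel \<and> V \<in> sets borel \<and> setdist U V \<ge> 1 \<longrightarrow>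
      prob_space.indep_set M (Fsig M Hf U) (Fsig M Hf V))"

definition smooth :: "(real \<Rightarrow> real) \<Rightarrow> bool" where
  "smooth f \<longleftrightarrow> (\<forall>n x. ((deriv ^^ n) f) differentiable (at x))"

definition H7_WFL :: "'a measure \<Rightarrow> (real \<Rightarrow> real) \<Rightarrow> (real \<Rightarrow> real \<Rightarrow> 'a \<Rightarrow> real)
     \<Rightarrow> (real \<Rightarrow> real \<Rightarrow> 'a \<Rightarrow> real) \<Rightarrow> (real \<Rightarrow> real \<Rightarrow> 'a \<Rightarrow> real) \<Rightarrow> bool" where
  "H7_WFL M \<phi> HL HR Hf \<longleftrightarrow> smooth \<phi> \<and> antimono \<phi> \<and>
     (\<forall>y\<le>-1. \<phi> y = 1) \<and> (\<forall>y\<ge>1. \<phi> y = 0) \<and>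
     (\<forall>p y. \<forall>\<omega>\<in>space M. Hf p y \<omega> = \<phi> y * HL p y \<omega> + (1 - \<phi> y) * HR p y \<omega>)"

definition H7_eps :: "'a measure \<Rightarrow> real \<Rightarrow> (real \<Rightarrow> real) \<Rightarrow> (real \<Rightarrow> real \<Rightarrow> 'a \<Rightarrow> real)
     \<Rightarrow> (real \<Rightarrow> real \<Rightarrow> 'a \<Rightarrow> real) \<Rightarrow> (real \<Rightarrow> real \<Rightarrow> 'a \<Rightarrow> real) \<Rightarrow> (real \<Rightarrow> real \<Rightarrow> 'a \<Rightarrow> real) \<Rightarrow> bool" where
  "H7_eps M \<epsilon> \<psi> HL HR H0 Hf \<longleftrightarrow> smooth \<psi> \<and>
     (\<forall>y. y > 2 / sqrt \<epsilon> \<longrightarrow> \<psi> y = 1) \<and> (\<forall>y. y < 1 / sqrt \<epsilon> \<longrightarrow> \<psi> y = 0) \<and>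
     (\<forall>p y. \<forall>\<omega>\<in>space M. H0 p y \<omega> \<ge> HL p y \<omega> \<and> H0 p y \<omega> \<ge> HR p y \<omega>) \<and>
     (\<forall>p y. \<forall>\<omega>\<in>space M. Hf p y \<omega> = \<psi> (- y) * HL p y \<omega>
          + H0 p y \<omega> * (1 - \<psi> (- y)) * (1 - \<psi> y) + \<psi> y * HR p y \<omega>)"

end

theory Submission
  imports Defs
begin


definition sint :: "(real \<Rightarrow> real) \<Rightarrow> real \<Rightarrow> real" where
  "sint f u = (if 0 \<le> u then integral {0..u} f else - integral {u..0} f)"

lemma sint_diff:
  fixes f :: "real \<Rightarrow> real"
  assumes int: "\<And>a b. f integrable_on {a..b}" and ab: "a \<le> b"
  shows "integral {a..b} f = sint f b - sint f a"
proof (cases "0 \<le> a")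
  case True
  then show ?thesis using Henstock_Kurzweil_Integration.integral_combine[OF True ab int] ab by (simp add: sint_def)
next
  case False
  show ?thesis
  proof (cases "b < 0")
    case True
    then have "integral {a..b} f + integral {b..0} f = integral {a..0} f"
      using Henstock_Kurzweil_Integration.integral_combine[OF ab _ int, of 0] by simp
    then show ?thesis using True False by (simp add: sint_def)
  next
    case False2: False
    then have "integral {a..0} f + integral {0..b} f = integral {a..b} f"
      using Henstock_Kurzweil_Integration.integral_combine[of a 0 b, OF _ _ int] False by simp
    then show ?thesis using False False2 by (simp add: sint_def)
  qed
qed

lemma integral_abs_bound:
  fixes f :: "real \<Rightarrow> real"
  assumes int: "f integrable_on {a..b}" and ab: "a \<le> b" and bd: "\<And>s. \<bar>f s\<bar> \<le> R"
  shows "\<bar>integral {a..b} f\<bar> \<le> R * (b - a)"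
proof -
  have "integral {a..b} f \<le> integral {a..b} (\<lambda>_. R)"
    by (rule Henstock_Kurzweil_Integration.integral_le[OF int]) (use bd abs_le_D1 in auto)
  moreover have "integral {a..b} (\<lambda>_. -R) \<le> integral {a..b} f"
    by (rule Henstock_Kurzweil_Integration.integral_le[OF _ int]) (auto, metis abs_le_iff bd minus_le_iff)
  ultimately show ?thesis using ab by (simp add: abs_le_iff mult.commute)
qed

lemma sint_lip:
  fixes f :: "real \<Rightarrow> real"
  assumes int: "\<And>a b. f integrable_on {a..b}" and bd: "\<And>s. \<bar>f s\<bar> \<le> R"
  shows "\<bar>sint f u - sint f v\<bar> \<le> R * \<bar>u - v\<bar>"
proof (cases "v \<le> u")
  case True
  then show ?thesis using sint_diff[OF int True] integral_abs_bound[OF int True bd] by simp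
next
  case False
  then have vu: "u \<le> v" by simp
  then show ?thesis using sint_diff[OF int vu] integral_abs_bound[OF int vu bd]
    by (simp add: abs_minus_commute)
qed

lemma sint_deriv:
  fixes f :: "real \<Rightarrow> real"
  assumes c: "continuous_on UNIV f"
  shows "(sint f has_real_derivative f x) (at x)"
proof -
  have int: "\<And>a b. f integrable_on {a..b}"
    by (rule integrable_continuous_real) (rule continuous_on_subset[OF c], simp)
  have "((\<lambda>u. integral {x-1..u} f) has_vector_derivative f x) (at x within {x-1..x+1})"
    by (rule integral_has_vector_derivative) (auto intro: continuous_on_subset[OF c])
  then have "((\<lambda>u. integral {x-1..u} f) has_real_derivative f x) (at x)"
    by (simp add: has_real_derivative_iff_has_vector_derivative at_within_Icc_at)
  then have d: "((\<lambda>u. sint f (x-1) + integral {x-1..u} f) has_real_derivative f x) (at x)"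
    by (auto intro!: derivative_eq_intros)
  show ?thesis
  proof (rule has_field_derivative_transform_within[OF d, of 1])
    fix y assume "y \<in> UNIV" "dist y x < 1"
    then have "x - 1 \<le> y" by (simp add: dist_real_def abs_less_iff)
    then show "sint f (x - 1) + integral {x - 1..y} f = sint f y"
      using sint_diff[OF int, of "x-1" y] by simp
  qed auto
qed


locale core =
  fixes G :: "real \<Rightarrow> real \<Rightarrow> real" and mu :: real
  assumes lip: "\<exists>L. \<forall>p q s. \<bar>G p s - G q s\<bar> \<le> L * \<bar>p - q\<bar>"
    and modu: "\<exists>w. modulus w \<and> (\<forall>p x y. \<bar>G p y - G p x\<bar> \<le> w (\<bar>x - y\<bar> * (1 + \<bar>p\<bar>)))"
    and coer: "\<forall>K. \<exists>R. \<forall>p s. \<bar>p\<bar> \<ge> R \<longrightarrow> G p s \<ge> K"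
    and conv: "\<forall>s. convex_on UNIV (\<lambda>p. G p s)"
    and min0: "\<forall>p s. G p s \<ge> G 0 s"
    and sub: "\<forall>s. G 0 s < mu"
begin

definition b where "b s = measure lborel {p. 0 \<le> p \<and> G p s < mu}"

lemma contp: "continuous_on UNIV (\<lambda>p. G p s)"
proof -
  obtain L where L: "\<forall>p q s. \<bar>G p s - G q s\<bar> \<le> L * \<bar>p - q\<bar>" using lip by blast
  have "(max L 0)-lipschitz_on UNIV (\<lambda>p. G p s)"
    unfolding lipschitz_on_def dist_real_def
  proof (intro conjI ballI)
    fix x y :: real
    have "\<bar>G x s - G y s\<bar> \<le> L * \<bar>x - y\<bar>" using L by blast
    also have "\<dots> \<le> max L 0 * \<bar>x - y\<bar>" by (intro mult_right_mono) auto
    finally show "\<bar>G x s - G y s\<bar> \<le> max L 0 * \<bar>x - y\<bar>" .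
  qed auto
  then show ?thesis by (rule lipschitz_on_continuous_on)
qed

lemma contx: "((\<lambda>s. G p s) \<longlongrightarrow> G p s0) (at s0)"
proof -
  obtain w where w: "modulus w" "\<forall>p x y. \<bar>G p y - G p x\<bar> \<le> w (\<bar>x - y\<bar> * (1 + \<bar>p\<bar>))"
    using modu by blast
  have wc: "continuous_on {0..} w" and w0: "w 0 = 0" using w(1) by (auto simp: modulus_def)
  have "((\<lambda>s. \<bar>s0 - s\<bar> * (1 + \<bar>p\<bar>)) \<longlongrightarrow> \<bar>s0 - s0\<bar> * (1 + \<bar>p\<bar>)) (at s0)"
    by (intro tendsto_intros)
  then have "((\<lambda>s. w (\<bar>s0 - s\<bar> * (1 + \<bar>p\<bar>))) \<longlongrightarrow> w 0) (at s0)"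
    by (intro continuous_on_tendsto_compose[OF wc]) auto
  then have t: "((\<lambda>s. w (\<bar>s0 - s\<bar> * (1 + \<bar>p\<bar>))) \<longlongrightarrow> 0) (at s0)" using w0 by simp
  have "((\<lambda>s. G p s - G p s0) \<longlongrightarrow> 0) (at s0)"
    by (rule Lim_null_comparison[OF _ t]) (use w(2) in auto)
  then show ?thesis by (simp add: LIM_zero_iff)
qed

lemma root_props:
  "0 \<le> b s \<and> G (b s) s = mu \<and> (\<forall>p. 0 \<le> p \<and> p < b s \<longrightarrow> G p s < mu) \<and> (\<forall>p. b s < p \<longrightarrow> mu < G p s)"
proof -
  obtain R where R: "\<forall>p s. \<bar>p\<bar> \<ge> R \<longrightarrow> G p s \<ge> mu" using coer by blast
  define R' where "R' = max R 1"
  have "G R' s \<ge> mu" using R by (auto simp: R'_def)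
  moreover have "G 0 s \<le> mu" using sub less_imp_le by blast
  moreover have "0 \<le> R'" by (simp add: R'_def)
  ultimately obtain \<beta> where \<beta>: "0 \<le> \<beta>" "G \<beta> s = mu"
    using IVT'[of "\<lambda>p. G p s" 0 mu R'] continuous_on_subset[OF contp] by blast
  have cv: "\<And>u v x y. 0 \<le> u \<Longrightarrow> 0 \<le> v \<Longrightarrow> u + v = 1 \<Longrightarrow> G (u * x + v * y) s \<le> u * G x s + v * G y s"
    using conv by (auto simp: convex_on_def)
  have below: "G p s < mu" if "0 \<le> p" "p < \<beta>" for p
  proof -
    define t where "t = p / \<beta>"
    have bpos: "\<beta> > 0" using that by simp
    have t01: "0 \<le> t" "t < 1" using that bpos by (auto simp: t_def field_simps)
    have "p = (1 - t) * 0 + t * \<beta>" using bpos by (simp add: t_def)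
    then have "G p s \<le> (1 - t) * G 0 s + t * G \<beta> s" using cv[of "1-t" t 0 \<beta>] t01 by simp
    also have "\<dots> < (1 - t) * mu + t * mu"
    proof -
      have "(1 - t) * G 0 s < (1 - t) * mu" using sub t01 by (intro mult_strict_left_mono) auto
      then show ?thesis using \<beta>(2) by simp
    qed
    finally show ?thesis by (simp add: algebra_simps)
  qed
  have above: "mu < G p s" if "\<beta> < p" for p
  proof (rule ccontr)
    assume na: "\<not> mu < G p s"
    define t where "t = \<beta> / p"
    have ppos: "p > 0" using that \<beta> by simp
    have t01: "0 \<le> t" "t < 1" using that ppos \<beta> by (auto simp: t_def field_simps)
    have "\<beta> = (1 - t) * 0 + t * p" using ppos by (simp add: t_def)
    then have "mu \<le> (1 - t) * G 0 s + t * G p s" using cv[of "1-t" t 0 p] t01 \<beta> by simp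
    also have "\<dots> < (1 - t) * mu + t * mu"
    proof -
      have "(1 - t) * G 0 s < (1 - t) * mu" using sub t01 by (intro mult_strict_left_mono) auto
      moreover have "t * G p s \<le> t * mu" using na t01 by (intro mult_left_mono) auto
      ultimately show ?thesis by simp
    qed
    finally show False by (simp add: algebra_simps)
  qed
  have "{p. 0 \<le> p \<and> G p s < mu} = {0..<\<beta>}"
  proof (intro set_eqI iffI)
    fix p assume "p \<in> {p. 0 \<le> p \<and> G p s < mu}"
    then have "0 \<le> p" "G p s < mu" by auto
    then show "p \<in> {0..<\<beta>}" using above[of p] \<beta> by (cases "p < \<beta>") (auto simp: not_less order.order_iff_strict)
  qed (use below in auto)
  then have "b s = \<beta>" using \<beta> by (simp add: b_def)
  then show ?thesis using \<beta> below above by auto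
qed

lemma b_nonneg: "0 \<le> b s" and b_root: "G (b s) s = mu"
  and b_below: "0 \<le> p \<Longrightarrow> p < b s \<Longrightarrow> G p s < mu"
  and b_above: "b s < p \<Longrightarrow> mu < G p s"
  using root_props by auto

lemma b_bounded: "\<exists>Rb. \<forall>s. \<bar>b s\<bar> \<le> Rb"
proof -
  obtain R where R: "\<forall>p s. \<bar>p\<bar> \<ge> R \<longrightarrow> G p s \<ge> mu + 1" using coer by blast
  have "\<bar>b s\<bar> \<le> max R 0" for s
  proof (rule ccontr)
    assume "\<not> \<bar>b s\<bar> \<le> max R 0"
    then have "\<bar>b s\<bar> \<ge> R" by auto
    then have "G (b s) s \<ge> mu + 1" using R by blast
    then show False using b_root[of s] by simp
  qed
  then show ?thesis by blast
qed

lemma b_cont: "continuous_on UNIV b"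
proof -
  have "(b \<longlongrightarrow> b s0) (at s0)" for s0
  proof (rule order_tendstoI)
    fix a assume a: "a < b s0"
    show "eventually (\<lambda>s. a < b s) (at s0)"
    proof (cases "a < 0")
      case True
      then show ?thesis using b_nonneg by (auto intro: always_eventually less_le_trans)
    next
      case False
      then have "G a s0 < mu" using b_below[of a s0] a by simp
      then have "eventually (\<lambda>s. G a s < mu) (at s0)" using order_tendstoD(2)[OF contx] by blast
      then show ?thesis
      proof (rule eventually_mono)
        fix s assume "G a s < mu"
        then show "a < b s" using b_above[of s a] b_root[of s] by (cases "b s < a") (auto simp: not_less order.order_iff_strict)
      qed
    qed
  next
    fix a assume a: "b s0 < a"
    then have "mu < G a s0" using b_above by blast
    then have "eventually (\<lambda>s. mu < G a s) (at s0)" using order_tendstoD(1)[OF contx] by blast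
    then show "eventually (\<lambda>s. b s < a) (at s0)"
    proof (rule eventually_mono)
      fix s assume h: "mu < G a s"
      have "0 \<le> a" using a b_nonneg[of s0] by simp
      then show "b s < a" using h b_below[of a s] b_root[of s] by (cases "a < b s") (auto simp: not_less order.order_iff_strict)
    qed
  qed
  then show ?thesis by (simp add: continuous_on_def continuous_at_imp_continuous_within isCont_def)
qed

end


context core begin

lemma b_int: "b integrable_on {a..c}"
  by (rule integrable_continuous_real) (rule continuous_on_subset[OF b_cont], simp)

lemma W_deriv: "(sint b has_real_derivative b x) (at x)"
  by (rule sint_deriv[OF b_cont])

lemma W_lip: obtains Rb where "Rb \<ge> 0" "\<And>u v. \<bar>sint b u - sint b v\<bar> \<le> Rb * \<bar>u - v\<bar>"
proof -
  obtain Rb where Rb: "\<forall>s. \<bar>b s\<bar> \<le> Rb" using b_bounded by blast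
  have "Rb \<ge> 0" using Rb abs_ge_zero order_trans by blast
  then show ?thesis using that sint_lip[OF b_int, of Rb] Rb by blast
qed

lemma W_cont: "continuous_on UNIV (sint b)"
  using W_deriv by (meson DERIV_isCont continuous_at_imp_continuous_on)

lemma W_sub: "glob_lip (sint b) \<and> visc_sub G (sint b) mu"
proof
  obtain Rb where Rb: "Rb \<ge> 0" "\<And>u v. \<bar>sint b u - sint b v\<bar> \<le> Rb * \<bar>u - v\<bar>" using W_lip by blast
  have "Rb-lipschitz_on UNIV (sint b)" unfolding lipschitz_on_def dist_real_def using Rb by auto
  then show "glob_lip (sint b)" unfolding glob_lip_def by blast
next
  show "visc_sub G (sint b) mu"
    unfolding visc_sub_def
  proof (intro conjI allI impI W_cont)
    fix \<phi> \<phi>' y0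
    assume h: "(\<forall>y. (\<phi> has_real_derivative \<phi>' y) (at y)) \<and> continuous_on UNIV \<phi>' \<and>
        (\<exists>e>0. \<forall>y. \<bar>y - y0\<bar> < e \<longrightarrow> sint b y - \<phi> y \<le> sint b y0 - \<phi> y0)"
    then obtain e where e: "e > 0" "\<forall>y. \<bar>y - y0\<bar> < e \<longrightarrow> sint b y - \<phi> y \<le> sint b y0 - \<phi> y0" by blast
    have d: "((\<lambda>y. sint b y - \<phi> y) has_real_derivative b y0 - \<phi>' y0) (at y0)"
      using h W_deriv by (auto intro!: derivative_eq_intros)
    have "b y0 - \<phi>' y0 = 0"
      by (rule DERIV_local_max[OF d e(1)]) (use e(2) in \<open>auto simp: abs_minus_commute\<close>)
    then show "G (\<phi>' y0) y0 \<le> mu" using b_root[of y0] by simp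
  qed
qed

lemma upper:
  assumes v: "glob_lip v" "visc_sub G v mu" and xy: "x \<le> y"
  shows "v y - v x \<le> sint b y - sint b x"
proof (rule ccontr)
  assume neg: "\<not> ?thesis"
  define D where "D = (v y - v x) - (sint b y - sint b x)"
  have Dpos: "D > 0" using neg by (simp add: D_def)
  have xly: "x < y" using Dpos xy by (cases "x = y") (auto simp: D_def)
  define \<delta> where "\<delta> = D / (2 * (y - x))"
  define K where "K = D / (4 * (y - x)^2)"
  have dpos: "\<delta> > 0" and Kpos: "K > 0" using Dpos xly by (auto simp: \<delta>_def K_def)
  define \<phi> where "\<phi> s = sint b s + \<delta> * s + K * (s - x)^2" for s
  define \<phi>' where "\<phi>' s = b s + \<delta> + 2 * K * (s - x)" for s
  define h where "h s = v s - \<phi> s" for s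
  obtain Lv where Lv: "Lv-lipschitz_on UNIV v" using v(1) unfolding glob_lip_def by blast
  then have Lv0: "Lv \<ge> 0" and Lvl: "\<And>u w. \<bar>v u - v w\<bar> \<le> Lv * \<bar>u - w\<bar>"
    unfolding lipschitz_on_def dist_real_def by auto
  obtain Rb where Rb: "Rb \<ge> 0" "\<And>u v. \<bar>sint b u - sint b v\<bar> \<le> Rb * \<bar>u - v\<bar>" using W_lip by blast
  have vc: "continuous_on UNIV v" using lipschitz_on_continuous_on[OF Lv] .
  have hc: "continuous_on UNIV h" unfolding h_def \<phi>_def
    by (intro continuous_intros vc continuous_on_subset[OF W_cont]) auto
  have dphi: "\<forall>s. (\<phi> has_real_derivative \<phi>' s) (at s)"
    unfolding \<phi>_def \<phi>'_def using W_deriv by (auto intro!: derivative_eq_intros)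
  have cphi: "continuous_on UNIV \<phi>'" unfolding \<phi>'_def by (intro continuous_intros b_cont)
  have hyx: "h y - h x = D / 4"
  proof -
    have "h y - h x = D - \<delta> * (y - x) - K * (y - x)^2"
      by (simp add: h_def \<phi>_def D_def algebra_simps)
    also have "\<delta> * (y - x) = D / 2" using xly by (simp add: \<delta>_def field_simps)
    also have "K * (y - x)^2 = D / 4" using xly by (simp add: K_def field_simps)
    finally show ?thesis by simp
  qed
  define C where "C = (Lv + Rb) / K"
  have far: "h s \<le> h x" if "x + C \<le> s" for s
  proof -
    have sx: "s - x \<ge> C" using that by simp
    have C0: "C \<ge> 0" using Lv0 Rb Kpos by (simp add: C_def)
    have "h s - h x = (v s - v x) - (sint b s - sint b x) - \<delta> * (s - x) - K * (s - x)^2"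
      by (simp add: h_def \<phi>_def algebra_simps)
    also have "\<dots> \<le> Lv * (s - x) + Rb * (s - x) - K * (s - x)^2"
    proof -
      have "v s - v x \<le> Lv * (s - x)" using Lvl[of s x] sx C0 by simp
      moreover have "- (sint b s - sint b x) \<le> Rb * (s - x)" using Rb(2)[of s x] sx C0 by simp
      moreover have "\<delta> * (s - x) \<ge> 0" using dpos sx C0 by simp
      ultimately show ?thesis by linarith
    qed
    also have "\<dots> = (s - x) * ((Lv + Rb) - K * (s - x))" by (simp add: algebra_simps power2_eq_square)
    also have "\<dots> \<le> 0"
    proof -
      have "K * (s - x) \<ge> K * C" using sx Kpos by simp
      also have "K * C = Lv + Rb" using Kpos by (simp add: C_def)
      finally show ?thesis using sx C0 by (intro mult_nonneg_nonpos) auto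
    qed
    finally show ?thesis by simp
  qed
  define U where "U = max (x + C) y"
  have "\<exists>s0\<in>{x..U}. \<forall>s\<in>{x..U}. h s \<le> h s0"
    using continuous_attains_sup[of "{x..U}" h] continuous_on_subset[OF hc] xly
    by (auto simp: U_def)
  then obtain s0 where s0: "s0 \<in> {x..U}" "\<forall>s\<in>{x..U}. h s \<le> h s0" by blast
  have hs0: "h s0 \<ge> h y" using s0 xly by (auto simp: U_def)
  then have "s0 \<noteq> x" using hyx Dpos by auto
  then have s0x: "s0 > x" using s0 by auto
  have allmax: "h s \<le> h s0" if "x \<le> s" for s
  proof (cases "s \<le> U")
    case True then show ?thesis using s0 that by auto
  next
    case False
    then have "h s \<le> h x" by (intro far) (auto simp: U_def)
    then show ?thesis using hs0 hyx Dpos by linarith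
  qed
  have "\<exists>e>0. \<forall>s. \<bar>s - s0\<bar> < e \<longrightarrow> v s - \<phi> s \<le> v s0 - \<phi> s0"
  proof (intro exI[of _ "s0 - x"] conjI allI impI)
    fix s assume "\<bar>s - s0\<bar> < s0 - x"
    then have "x \<le> s" by auto
    then show "v s - \<phi> s \<le> v s0 - \<phi> s0" using allmax unfolding h_def by blast
  qed (use s0x in simp)
  then have "G (\<phi>' s0) s0 \<le> mu" using v(2) dphi cphi unfolding visc_sub_def by blast
  moreover have "b s0 < \<phi>' s0" using dpos Kpos s0x by (simp add: \<phi>'_def add_pos_nonneg)
  ultimately show False using b_above[of s0 "\<phi>' s0"] by simp
qed

lemma metric_eq:
  assumes "x \<le> y"
  shows "Sup {v y - v x | v. glob_lip v \<and> visc_sub G v mu} = sint b y - sint b x"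
  by (rule cSup_eq_maximum) (use W_sub upper assms in auto)

end


lemma sub_le_level:
  fixes G :: "real \<Rightarrow> real \<Rightarrow> real"
  assumes v: "glob_lip v" "visc_sub G v lam"
    and w: "modulus w" "\<forall>p x y. \<bar>G p y - G p x\<bar> \<le> w (\<bar>x - y\<bar> * (1 + \<bar>p\<bar>))"
    and m0: "\<forall>p s. G p s \<ge> G 0 s"
  shows "G 0 s \<le> lam"
proof (rule ccontr)
  assume neg: "\<not> G 0 s \<le> lam"
  define \<epsilon> where "\<epsilon> = G 0 s - lam"
  have epos: "\<epsilon> > 0" using neg by (simp add: \<epsilon>_def)
  have wc: "continuous_on {0..} w" and w0: "w 0 = 0" and wm: "mono_on {0..} w"
    using w(1) by (auto simp: modulus_def)
  obtain d where d: "d > 0" "\<forall>t\<in>{0..}. dist t 0 < d \<longrightarrow> dist (w t) (w 0) < \<epsilon>"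
    using wc epos unfolding continuous_on_iff by (metis atLeast_iff order_refl)
  obtain Lv where Lv: "Lv-lipschitz_on UNIV v" using v(1) unfolding glob_lip_def by blast
  then have Lv0: "Lv \<ge> 0" and Lvl: "\<And>u w. \<bar>v u - v w\<bar> \<le> Lv * \<bar>u - w\<bar>"
    unfolding lipschitz_on_def dist_real_def by auto
  have vc: "continuous_on UNIV v" using lipschitz_on_continuous_on[OF Lv] .
  define K where "K = (Lv + 1) / d"
  have Kpos: "K > 0" using d Lv0 by (simp add: K_def)
  define C where "C = Lv / K"
  have C0: "C \<ge> 0" and Cd: "C < d" using Kpos Lv0 d by (auto simp: C_def K_def field_simps)
  define h where "h r = v r - K * (r - s)^2" for r
  have hc: "continuous_on UNIV h" unfolding h_def by (intro continuous_intros vc)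
  have far: "h r < h s" if "\<bar>r - s\<bar> > C" for r
  proof -
    have "h r - h s = (v r - v s) - K * \<bar>r - s\<bar>^2" by (simp add: h_def)
    also have "\<dots> \<le> Lv * \<bar>r - s\<bar> - K * \<bar>r - s\<bar>^2" using Lvl[of r s] by simp
    also have "\<dots> = \<bar>r - s\<bar> * (Lv - K * \<bar>r - s\<bar>)" by (simp add: algebra_simps power2_eq_square)
    also have "\<dots> < 0"
    proof -
      have "K * \<bar>r - s\<bar> > K * C" using that Kpos by simp
      also have "K * C = Lv" using Kpos by (simp add: C_def)
      finally show ?thesis using that C0 by (intro mult_pos_neg) auto
    qed
    finally show ?thesis by simp
  qed
  have "\<exists>r0\<in>{s - C..s + C}. \<forall>r\<in>{s - C..s + C}. h r \<le> h r0"
    using continuous_attains_sup[of "{s - C..s + C}" h] continuous_on_subset[OF hc] C0 by auto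
  then obtain r0 where r0: "r0 \<in> {s - C..s + C}" "\<forall>r\<in>{s - C..s + C}. h r \<le> h r0" by blast
  have hsr0: "h s \<le> h r0" using r0 C0 by auto
  have gmax: "h r \<le> h r0" for r
  proof (cases "\<bar>r - s\<bar> \<le> C")
    case True then show ?thesis using r0 by (auto simp: abs_le_iff)
  next
    case False then show ?thesis using far[of r] hsr0 by simp
  qed
  have dist0: "\<bar>r0 - s\<bar> \<le> C" using r0 by (auto simp: abs_le_iff)
  define \<phi> where "\<phi> r = K * (r - s)^2" for r
  have dphi: "\<forall>r. (\<phi> has_real_derivative 2 * K * (r - s)) (at r)"
    unfolding \<phi>_def by (auto intro!: derivative_eq_intros)
  have cphi: "continuous_on UNIV (\<lambda>r. 2 * K * (r - s))" by (intro continuous_intros)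
  have "\<exists>e>0. \<forall>r. \<bar>r - r0\<bar> < e \<longrightarrow> v r - \<phi> r \<le> v r0 - \<phi> r0"
    using gmax by (intro exI[of _ 1]) (auto simp: h_def \<phi>_def)
  then have "G ((\<lambda>r. 2 * K * (r - s)) r0) r0 \<le> lam"
    using v(2)[unfolded visc_sub_def, THEN conjunct2, rule_format, of \<phi> "\<lambda>r. 2 * K * (r - s)" r0] dphi cphi
    by blast
  then have g1: "G 0 r0 \<le> lam" using m0 order_trans by blast
  have "G 0 s - G 0 r0 \<le> w (\<bar>r0 - s\<bar>)" using w(2)[rule_format, of 0 r0 s] by (simp add: abs_minus_commute abs_le_iff)
  also have "\<dots> < \<epsilon>" using d(2)[rule_format, of "\<bar>r0 - s\<bar>"] dist0 Cd w0 by (simp add: dist_real_def)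
  finally show False using g1 by (simp add: \<epsilon>_def)
qed

lemma zero_sub:
  fixes G :: "real \<Rightarrow> real \<Rightarrow> real"
  assumes "\<forall>s. G 0 s \<le> lam"
  shows "glob_lip (\<lambda>_. 0) \<and> visc_sub G (\<lambda>_. 0) lam"
proof
  have "0-lipschitz_on UNIV (\<lambda>_::real. 0::real)" by (simp add: lipschitz_on_def)
  then show "glob_lip (\<lambda>_. 0)" unfolding glob_lip_def by blast
next
  show "visc_sub G (\<lambda>_. 0) lam"
    unfolding visc_sub_def
  proof (intro conjI allI impI continuous_on_const)
    fix \<phi> \<phi>' y0
    assume h: "(\<forall>y. (\<phi> has_real_derivative \<phi>' y) (at y)) \<and> continuous_on UNIV \<phi>' \<and>
        (\<exists>e>0. \<forall>y. \<bar>y - y0\<bar> < e \<longrightarrow> (0::real) - \<phi> y \<le> 0 - \<phi> y0)"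
    then obtain e where e: "e > 0" "\<forall>y. \<bar>y - y0\<bar> < e \<longrightarrow> (0::real) - \<phi> y \<le> 0 - \<phi> y0" by blast
    have d1: "(\<phi> has_real_derivative \<phi>' y0) (at y0)" using h by blast
    have e2: "\<forall>y. \<bar>y0 - y\<bar> < e \<longrightarrow> \<phi> y0 \<le> \<phi> y" using e(2) by (simp add: abs_minus_commute)
    have "\<phi>' y0 = 0" by (rule DERIV_local_min[OF d1 e(1) e2])
    then show "G (\<phi>' y0) y0 \<le> lam" using assms by simp
  qed
qed


definition hrefl :: "(real \<Rightarrow> real \<Rightarrow> 'a \<Rightarrow> real) \<Rightarrow> real \<Rightarrow> real \<Rightarrow> 'a \<Rightarrow> real" where
  "hrefl Hf = (\<lambda>p s \<omega>. Hf (- p) (- s) \<omega>)"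

lemma hrefl_hrefl[simp]: "hrefl (hrefl Hf) = Hf"
  by (simp add: hrefl_def)

lemma subsols_hrefl:
  assumes "v \<in> subsols Hf mu \<omega>"
  shows "(\<lambda>s. v (- s)) \<in> subsols (hrefl Hf) mu \<omega>"
proof -
  have gl: "glob_lip v" and vs: "visc_sub (\<lambda>p y. Hf p y \<omega>) v mu"
    using assms by (auto simp: subsols_def)
  obtain L where L: "L-lipschitz_on UNIV v" using gl unfolding glob_lip_def by blast
  have "L-lipschitz_on UNIV (\<lambda>s. v (- s))"
    using L unfolding lipschitz_on_def dist_real_def
  proof (intro conjI ballI)
    fix x y :: real assume "0 \<le> L \<and> (\<forall>x\<in>UNIV. \<forall>y\<in>UNIV. \<bar>v x - v y\<bar> \<le> L * \<bar>x - y\<bar>)"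
    then have "\<bar>v (- x) - v (- y)\<bar> \<le> L * \<bar>(- x) - (- y)\<bar>" by blast
    then show "\<bar>v (- x) - v (- y)\<bar> \<le> L * \<bar>x - y\<bar>" by (simp add: abs_minus_commute)
  qed auto
  then have g2: "glob_lip (\<lambda>s. v (- s))" unfolding glob_lip_def by blast
  have vc: "continuous_on UNIV v" using vs by (simp add: visc_sub_def)
  have "visc_sub (\<lambda>p y. hrefl Hf p y \<omega>) (\<lambda>s. v (- s)) mu"
    unfolding visc_sub_def
  proof (intro conjI allI impI)
    show "continuous_on UNIV (\<lambda>s. v (- s))"
      by (rule continuous_on_compose2[OF vc]) (auto intro: continuous_intros)
  next
    fix \<phi> \<phi>' y0
    assume h: "(\<forall>y. (\<phi> has_real_derivative \<phi>' y) (at y)) \<and> continuous_on UNIV \<phi>' \<and>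
        (\<exists>e>0. \<forall>y. \<bar>y - y0\<bar> < e \<longrightarrow> v (- y) - \<phi> y \<le> v (- y0) - \<phi> y0)"
    then obtain e where e: "e > 0" "\<forall>y. \<bar>y - y0\<bar> < e \<longrightarrow> v (- y) - \<phi> y \<le> v (- y0) - \<phi> y0" by blast
    have d2: "\<forall>y. ((\<lambda>x. \<phi> (- x)) has_real_derivative - \<phi>' (- y)) (at y)"
      using h DERIV_mirror by (metis minus_minus)
    have c2: "continuous_on UNIV (\<lambda>y. - \<phi>' (- y))"
    proof -
      have "continuous_on UNIV (\<lambda>y. \<phi>' (- y))"
        by (rule continuous_on_compose2[of UNIV \<phi>']) (use h in \<open>auto intro: continuous_intros\<close>)
      then show ?thesis by (intro continuous_intros)
    qed
    have ex: "\<exists>e>0. \<forall>y. \<bar>y - (- y0)\<bar> < e \<longrightarrow> v y - \<phi> (- y) \<le> v (- y0) - \<phi> (- (- y0))"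
    proof (intro exI[of _ e] conjI allI impI)
      fix y assume "\<bar>y - (- y0)\<bar> < e"
      then have "\<bar>(- y) - y0\<bar> < e" by (simp add: abs_minus_commute)
      then show "v y - \<phi> (- y) \<le> v (- y0) - \<phi> (- (- y0))" using e(2)[rule_format, of "- y"] by simp
    qed (use e in simp)
    have key: "(\<forall>y. ((\<lambda>x. \<phi> (- x)) has_real_derivative - \<phi>' (- y)) (at y)) \<and> continuous_on UNIV (\<lambda>y. - \<phi>' (- y)) \<and>
       (\<exists>e>0. \<forall>y. \<bar>y - (- y0)\<bar> < e \<longrightarrow> v y - \<phi> (- y) \<le> v (- y0) - \<phi> (- (- y0)))"
      using d2 c2 ex by (intro conjI)
    have "Hf ((\<lambda>y. - \<phi>' (- y)) (- y0)) (- y0) \<omega> \<le> mu"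
      by (rule vs[unfolded visc_sub_def, THEN conjunct2, rule_format, OF key])
    then show "hrefl Hf (\<phi>' y0) y0 \<omega> \<le> mu" by (simp add: hrefl_def)
  qed
  then show ?thesis using g2 by (simp add: subsols_def)
qed

lemma metric_hrefl:
  "metric_fn mu Hf y x \<omega> = metric_fn mu (hrefl Hf) (- y) (- x) \<omega>"
proof -
  have "{v y - v x | v. v \<in> subsols Hf mu \<omega>} = {u (- y) - u (- x) | u. u \<in> subsols (hrefl Hf) mu \<omega>}"
  proof (intro set_eqI iffI)
    fix z assume "z \<in> {v y - v x | v. v \<in> subsols Hf mu \<omega>}"
    then obtain v where v: "v \<in> subsols Hf mu \<omega>" "z = v y - v x" by blast
    have "(\<lambda>s. v (- s)) \<in> subsols (hrefl Hf) mu \<omega>" by (rule subsols_hrefl[OF v(1)])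
    then have "\<exists>u. z = u (- y) - u (- x) \<and> u \<in> subsols (hrefl Hf) mu \<omega>"
      using v(2) by (intro exI[of _ "\<lambda>s. v (- s)"]) simp
    then show "z \<in> {u (- y) - u (- x) | u. u \<in> subsols (hrefl Hf) mu \<omega>}" by blast
  next
    fix z assume "z \<in> {u (- y) - u (- x) | u. u \<in> subsols (hrefl Hf) mu \<omega>}"
    then obtain u where u: "u \<in> subsols (hrefl Hf) mu \<omega>" "z = u (- y) - u (- x)" by blast
    have "(\<lambda>s. u (- s)) \<in> subsols (hrefl (hrefl Hf)) mu \<omega>" by (rule subsols_hrefl[OF u(1)])
    then have "(\<lambda>s. u (- s)) \<in> subsols Hf mu \<omega>" by simp
    then have "\<exists>v. z = v y - v x \<and> v \<in> subsols Hf mu \<omega>"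
      using u(2) by (intro exI[of _ "\<lambda>s. u (- s)"]) simp
    then show "z \<in> {v y - v x | v. v \<in> subsols Hf mu \<omega>}" by blast
  qed
  then show ?thesis by (simp add: metric_fn_def)
qed


lemma measurable_funpow_self: "T \<in> measurable M M \<Longrightarrow> (T ^^ n) \<in> measurable M M"
  by (induction n) (auto intro: measurable_comp)

context prob_space
begin

fun Mx :: "(nat \<Rightarrow> 'a \<Rightarrow> real) \<Rightarrow> nat \<Rightarrow> 'a \<Rightarrow> real" where
  "Mx S 0 \<omega> = S 0 \<omega>"
| "Mx S (Suc n) \<omega> = max (Mx S n \<omega>) (S (Suc n) \<omega>)"

lemma Mx_ge: "k \<le> n \<Longrightarrow> S k \<omega> \<le> Mx S n \<omega>"
  by (induction n) (auto simp: le_Suc_eq max.coboundedI1)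

lemma Mx_attained: "\<exists>k\<le>n. Mx S n \<omega> = S k \<omega>"
  by (induction n) (auto simp: max_def intro: le_SucI)

lemma Mx_meas: "(\<And>k. S k \<in> borel_measurable M) \<Longrightarrow> Mx S n \<in> borel_measurable M"
proof (induction n)
  case 0
  have "Mx S 0 = S 0" by (rule ext) simp
  then show ?case using 0 by simp
next
  case (Suc n)
  have "Mx S (Suc n) = (\<lambda>\<omega>. max (Mx S n \<omega>) (S (Suc n) \<omega>))" by (rule ext) simp
  then show ?case using Suc by (auto intro: borel_measurable_max)
qed

lemma garsia:
  fixes F :: "'a \<Rightarrow> real"
  assumes T: "T \<in> measurable M M" and dT: "distr M M T = M"
    and F[measurable]: "F \<in> borel_measurable M" and Fb: "\<And>\<omega>. \<omega> \<in> space M \<Longrightarrow> \<bar>F \<omega>\<bar> \<le> C"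
  shows "0 \<le> (\<integral>\<omega>. F \<omega> * indicator {\<omega> \<in> space M. \<exists>k\<in>{1..N}. 0 < (\<Sum>j<k. F ((T ^^ j) \<omega>))} \<omega> \<partial>M)"
proof -
  define S where "S k \<omega> = (\<Sum>j<k. F ((T ^^ j) \<omega>))" for k \<omega>
  define B where "B = {\<omega> \<in> space M. \<exists>k\<in>{1..N}. 0 < S k \<omega>}"
  have Tj[measurable]: "(T ^^ j) \<in> measurable M M" for j using measurable_funpow_self[OF T] .
  have Sm[measurable]: "S k \<in> borel_measurable M" for k unfolding S_def
    by (intro borel_measurable_sum) (auto intro: measurable_compose[OF Tj F])
  have Mm[measurable]: "Mx S N \<in> borel_measurable M" by (rule Mx_meas[OF Sm])
  have Bm[measurable]: "B \<in> sets M" unfolding B_def by measurable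
  have C0: "0 \<le> C" using Fb some_in_eq[of "space M"] not_empty abs_ge_zero order_trans by metis
  have Sb: "\<bar>S k \<omega>\<bar> \<le> real k * C" if "\<omega> \<in> space M" for k \<omega>
  proof -
    have "\<bar>S k \<omega>\<bar> \<le> (\<Sum>j<k. \<bar>F ((T ^^ j) \<omega>)\<bar>)" unfolding S_def by (rule sum_abs)
    also have "\<dots> \<le> (\<Sum>j<k. C)"
      by (intro sum_mono Fb measurable_space[OF Tj that])
    finally show ?thesis by simp
  qed
  have Mb: "\<bar>Mx S N \<omega>\<bar> \<le> real N * C" if "\<omega> \<in> space M" for \<omega>
  proof -
    obtain k where "k \<le> N" "Mx S N \<omega> = S k \<omega>" using Mx_attained by blast
    then show ?thesis using Sb[OF that, of k] C0 by (smt (verit) mult_right_mono of_nat_mono)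
  qed
  have S0: "S 0 \<omega> = 0" for \<omega> by (simp add: S_def)
  have SSuc: "S (Suc k) \<omega> = F \<omega> + S k (T \<omega>)" for k \<omega>
    unfolding S_def by (subst sum.lessThan_Suc_shift) (simp add: funpow_Suc_right del: funpow.simps)
  have pw: "Mx S N \<omega> - Mx S N (T \<omega>) \<le> F \<omega> * indicator B \<omega>" if "\<omega> \<in> space M" for \<omega>
  proof (cases "\<omega> \<in> B")
    case True
    then obtain k where k: "k \<in> {1..N}" "0 < S k \<omega>" by (auto simp: B_def)
    obtain k0 where k0: "k0 \<le> N" "Mx S N \<omega> = S k0 \<omega>" using Mx_attained by blast
    have "S k0 \<omega> > 0" using Mx_ge[of k N S \<omega>] k k0 by auto
    then have "k0 \<noteq> 0" by (cases "k0 = 0") (simp_all add: S0)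
    then obtain k1 where k1: "k0 = Suc k1" by (cases k0) auto
    have "Mx S N \<omega> = F \<omega> + S k1 (T \<omega>)" using k0 k1 SSuc by simp
    also have "S k1 (T \<omega>) \<le> Mx S N (T \<omega>)" using k0 k1 by (intro Mx_ge) simp
    finally show ?thesis using True by simp
  next
    case False
    then have "\<forall>k\<in>{1..N}. S k \<omega> \<le> 0" using that by (auto simp: B_def not_less)
    moreover obtain k0 where k0: "k0 \<le> N" "Mx S N \<omega> = S k0 \<omega>" using Mx_attained by blast
    ultimately have "Mx S N \<omega> \<le> 0" using S0 by (cases "k0 = 0") auto
    moreover have "0 \<le> Mx S N (T \<omega>)" using Mx_ge[of 0 N S "T \<omega>"] S0 by simp
    ultimately show ?thesis using False by simp
  qed
  have iM: "integrable M (Mx S N)"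
    by (rule integrable_const_bound[where B="real N * C"]) (use Mb in auto)
  have iMT: "integrable M (\<lambda>\<omega>. Mx S N (T \<omega>))"
    by (rule integrable_const_bound[where B="real N * C"])
       (use Mb measurable_space[OF T] measurable_compose[OF T Mm] in auto)
  have iF: "integrable M (\<lambda>\<omega>. F \<omega> * indicator B \<omega>)"
    by (rule integrable_const_bound[where B="C"]) (use Fb C0 in \<open>auto simp: indicator_def\<close>)
  have eqT: "(\<integral>\<omega>. Mx S N (T \<omega>) \<partial>M) = (\<integral>\<omega>. Mx S N \<omega> \<partial>M)"
    using integral_distr[OF T Mm] dT by simp
  have "(\<integral>\<omega>. Mx S N \<omega> - Mx S N (T \<omega>) \<partial>M) \<le> (\<integral>\<omega>. F \<omega> * indicator B \<omega> \<partial>M)"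
    by (rule integral_mono[OF _ iF pw]) (use iM iMT in auto)
  moreover have "(\<integral>\<omega>. Mx S N \<omega> - Mx S N (T \<omega>) \<partial>M) = 0"
    using eqT iM iMT by simp
  ultimately show ?thesis by (simp add: B_def S_def)
qed


lemma garsia_mean:
  fixes F :: "'a \<Rightarrow> real"
  assumes T: "T \<in> measurable M M" and dT: "distr M M T = M"
    and F[measurable]: "F \<in> borel_measurable M" and Fb: "\<And>\<omega>. \<omega> \<in> space M \<Longrightarrow> \<bar>F \<omega>\<bar> \<le> C"
    and ae: "AE \<omega> in M. \<exists>k\<ge>1. a * real k < (\<Sum>j<k. F ((T ^^ j) \<omega>))"
  shows "a \<le> (\<integral>\<omega>. F \<omega> \<partial>M)"
proof -
  define G where "G \<omega> = F \<omega> - a" for \<omega>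
  have Gm[measurable]: "G \<in> borel_measurable M" unfolding G_def by measurable
  have Gb: "\<bar>G \<omega>\<bar> \<le> C + \<bar>a\<bar>" if "\<omega> \<in> space M" for \<omega> using Fb[OF that] by (simp add: G_def)
  define B where "B N = {\<omega> \<in> space M. \<exists>k\<in>{1..N}. 0 < (\<Sum>j<k. G ((T ^^ j) \<omega>))}" for N
  have g: "0 \<le> (\<integral>\<omega>. G \<omega> * indicator (B N) \<omega> \<partial>M)" for N
    unfolding B_def by (rule garsia[OF T dT Gm Gb])
  have Tj[measurable]: "(T ^^ j) \<in> measurable M M" for j using measurable_funpow_self[OF T] .
  have Bm[measurable]: "B N \<in> sets M" for N unfolding B_def by measurable
  have sumG: "(\<Sum>j<k. G ((T ^^ j) \<omega>)) = (\<Sum>j<k. F ((T ^^ j) \<omega>)) - real k * a" for k \<omega>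
    by (simp add: G_def sum_subtractf)
  have lim: "(\<lambda>N. \<integral>\<omega>. G \<omega> * indicator (B N) \<omega> \<partial>M) \<longlonglongrightarrow> (\<integral>\<omega>. G \<omega> \<partial>M)"
  proof (rule integral_dominated_convergence[where w="\<lambda>_. C + \<bar>a\<bar>"])
    show "AE \<omega> in M. (\<lambda>N. G \<omega> * indicator (B N) \<omega>) \<longlonglongrightarrow> G \<omega>"
      using ae
    proof (rule AE_mp[OF _ AE_I2[OF impI]])
      fix \<omega> assume \<omega>: "\<omega> \<in> space M" and "\<exists>k\<ge>1. a * real k < (\<Sum>j<k. F ((T ^^ j) \<omega>))"
      then obtain k where k: "k \<ge> 1" "a * real k < (\<Sum>j<k. F ((T ^^ j) \<omega>))" by blast
      have "eventually (\<lambda>N. G \<omega> * indicator (B N) \<omega> = G \<omega>) sequentially"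
        unfolding eventually_sequentially
      proof (intro exI[of _ k] allI impI)
        fix N assume "k \<le> N"
        then have "\<omega> \<in> B N" using k \<omega> by (auto simp: B_def sumG algebra_simps)
        then show "G \<omega> * indicator (B N) \<omega> = G \<omega>" by simp
      qed
      then show "(\<lambda>N. G \<omega> * indicator (B N) \<omega>) \<longlonglongrightarrow> G \<omega>" by (rule tendsto_eventually)
    qed
    show "AE \<omega> in M. norm (G \<omega> * indicator (B N) \<omega>) \<le> C + \<bar>a\<bar>" for N
      by (rule AE_I2) (auto simp: indicator_def Gb intro: order_trans[OF abs_ge_zero Gb])
  qed auto
  have "0 \<le> (\<integral>\<omega>. G \<omega> \<partial>M)" by (rule LIMSEQ_le_const[OF lim]) (use g in auto)
  moreover have iF: "integrable M F"
    by (rule integrable_const_bound[where B=C]) (use Fb in auto)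
  moreover have "(\<integral>\<omega>. G \<omega> \<partial>M) = (\<integral>\<omega>. F \<omega> \<partial>M) - a"
    unfolding G_def using iF by (simp add: prob_space)
  ultimately show ?thesis by simp
qed

end

lemma invariant_01:
  assumes E: "ergodic_group M \<tau>" and A: "A \<in> sets M"
    and inv: "\<And>z \<omega>. \<omega> \<in> space M \<Longrightarrow> \<tau> z \<omega> \<in> A \<longleftrightarrow> \<omega> \<in> A"
  shows "measure M A = 0 \<or> measure M A = 1"
proof -
  have "\<tau> z -` A \<inter> space M = A" for z
    using inv sets.sets_into_space[OF A] by auto
  then show ?thesis using E A unfolding ergodic_group_def by blast
qed

lemma (in prob_space) ergodic_const:
  fixes f :: "'a \<Rightarrow> real"
  assumes E: "ergodic_group M \<tau>" and f[measurable]: "f \<in> borel_measurable M"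
    and fb: "\<And>\<omega>. \<omega> \<in> space M \<Longrightarrow> \<bar>f \<omega>\<bar> \<le> C"
    and inv: "\<And>z \<omega>. \<omega> \<in> space M \<Longrightarrow> f (\<tau> z \<omega>) = f \<omega>"
  shows "AE \<omega> in M. f \<omega> = (\<integral>\<omega>. f \<omega> \<partial>M)"
proof -
  define c where "c = (\<integral>\<omega>. f \<omega> \<partial>M)"
  have tsp: "\<tau> z \<omega> \<in> space M" if "\<omega> \<in> space M" for z \<omega>
    using E that unfolding ergodic_group_def by (meson measurable_space)
  have iF: "integrable M f" by (rule integrable_const_bound[where B=C]) (use fb in auto)
  define A where "A = {\<omega> \<in> space M. c < f \<omega>}"
  define B where "B = {\<omega> \<in> space M. f \<omega> < c}"
  have Am[measurable]: "A \<in> sets M" unfolding A_def by measurable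
  have Bm[measurable]: "B \<in> sets M" unfolding B_def by measurable
  have "measure M A = 0 \<or> measure M A = 1"
    by (rule invariant_01[OF E Am]) (use tsp inv in \<open>auto simp: A_def\<close>)
  moreover have "measure M A \<noteq> 1"
  proof
    assume "measure M A = 1"
    then have "AE \<omega> in M. \<omega> \<in> A" by (rule AE_prob_1)
    then have "AE \<omega> in M. c < f \<omega>" by (auto simp: A_def)
    then have "(\<integral>\<omega>. c \<partial>M) < (\<integral>\<omega>. f \<omega> \<partial>M)"
      by (intro integral_less_AE_space iF) (auto simp: emeasure_space_1)
    then show False by (simp add: c_def prob_space)
  qed
  ultimately have "measure M A = 0" by simp
  then have nA: "A \<in> null_sets M" using Am by (simp add: emeasure_eq_measure null_sets_def)
  have "measure M B = 0 \<or> measure M B = 1"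
    by (rule invariant_01[OF E Bm]) (use tsp inv in \<open>auto simp: B_def\<close>)
  moreover have "measure M B \<noteq> 1"
  proof
    assume "measure M B = 1"
    then have "AE \<omega> in M. \<omega> \<in> B" by (rule AE_prob_1)
    then have "AE \<omega> in M. f \<omega> < c" by (auto simp: B_def)
    then have "(\<integral>\<omega>. f \<omega> \<partial>M) < (\<integral>\<omega>. c \<partial>M)"
      by (intro integral_less_AE_space iF) (auto simp: emeasure_space_1)
    then show False by (simp add: c_def prob_space)
  qed
  ultimately have "measure M B = 0" by simp
  then have nB: "B \<in> null_sets M" using Bm by (simp add: emeasure_eq_measure null_sets_def)
  show ?thesis
    using AE_space AE_not_in[OF nA] AE_not_in[OF nB]
    by eventually_elim (auto simp: A_def B_def c_def)
qed


lemma ergodic_props: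
  assumes "ergodic_group M \<tau>"
  shows tau_meas: "\<tau> z \<in> measurable M M"
    and tau_space: "\<omega> \<in> space M \<Longrightarrow> \<tau> z \<omega> \<in> space M"
    and tau_add: "\<omega> \<in> space M \<Longrightarrow> \<tau> (z + w) \<omega> = \<tau> z (\<tau> w \<omega>)"
    and tau_0: "\<omega> \<in> space M \<Longrightarrow> \<tau> 0 \<omega> = \<omega>"
    and tau_pres: "A \<in> sets M \<Longrightarrow> measure M (\<tau> z -` A \<inter> space M) = measure M A"
  using assms unfolding ergodic_group_def by (auto intro: measurable_space)

locale erg_setup = prob_space M for M :: "'a measure" +
  fixes \<tau> :: "real \<Rightarrow> 'a \<Rightarrow> 'a" and f :: "real \<Rightarrow> 'a \<Rightarrow> real" and R :: real
  assumes E: "ergodic_group M \<tau>"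
    and fm: "(\<lambda>(\<omega>, s). f s \<omega>) \<in> borel_measurable (M \<Otimes>\<^sub>M lborel)"
    and fb: "\<And>\<omega> s. \<omega> \<in> space M \<Longrightarrow> \<bar>f s \<omega>\<bar> \<le> R"
    and fs: "\<And>\<omega> s z. \<omega> \<in> space M \<Longrightarrow> f (s + z) \<omega> = f s (\<tau> z \<omega>)"
begin

lemma fsec: "\<omega> \<in> space M \<Longrightarrow> (\<lambda>s. f s \<omega>) \<in> borel_measurable lborel"
  using measurable_Pair2[OF fm, of \<omega>] by simp

lemma fset: "\<omega> \<in> space M \<Longrightarrow> set_integrable lborel {a..b} (\<lambda>s. f s \<omega>)"
  unfolding set_integrable_def
  by (rule integrableI_bounded_set_indicator[where B=R])
     (use fsec[of \<omega>] in \<open>auto simp: fb emeasure_lborel_Icc_eq\<close>)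

lemma fint: "\<omega> \<in> space M \<Longrightarrow> (\<lambda>s. f s \<omega>) integrable_on {a..b}"
  using set_borel_integral_eq_integral(1)[OF fset] by blast

lemma fLINT: "\<omega> \<in> space M \<Longrightarrow> (LINT s:{a..b}|lborel. f s \<omega>) = integral {a..b} (\<lambda>s. f s \<omega>)"
  using set_borel_integral_eq_integral(2)[OF fset] by blast

definition F where "F \<omega> = integral {0..1} (\<lambda>s. f s \<omega>)"

lemma F_meas[measurable]: "F \<in> borel_measurable M"
proof -
  have "(\<lambda>x. indicator {0..1} (snd x) *\<^sub>R (case x of (\<omega>, s) \<Rightarrow> f s \<omega>)) \<in> borel_measurable (M \<Otimes>\<^sub>M lborel)"
    using fm by measurable
  then have "case_prod (\<lambda>\<omega> s. indicator {0..1} s *\<^sub>R f s \<omega>) \<in> borel_measurable (M \<Otimes>\<^sub>M lborel)"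
    by (simp add: case_prod_beta')
  then have "(\<lambda>\<omega>. \<integral>s. indicator {0..1} s *\<^sub>R f s \<omega> \<partial>lborel) \<in> borel_measurable M"
    by (rule lborel.borel_measurable_lebesgue_integral)
  then show ?thesis
    by (rule measurable_cong[THEN iffD1, rotated])
       (simp add: F_def fLINT[symmetric] set_lebesgue_integral_def)
qed

lemma F_bound: "\<omega> \<in> space M \<Longrightarrow> \<bar>F \<omega>\<bar> \<le> R"
  using integral_abs_bound[OF fint, of \<omega> 0 1 R] fb by (simp add: F_def)

abbreviation "T \<equiv> \<tau> 1"

lemma T_meas: "T \<in> measurable M M" using tau_meas[OF E] .

lemma T_distr: "distr M M T = M"
proof (rule measure_eqI)
  fix A assume A: "A \<in> sets (distr M M T)"
  then have A': "A \<in> sets M" by simp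
  have "emeasure (distr M M T) A = emeasure M (T -` A \<inter> space M)"
    by (rule emeasure_distr[OF T_meas A'])
  also have "\<dots> = emeasure M A"
    using tau_pres[OF E A', of 1] measurable_sets[OF T_meas A'] A'
    by (simp add: emeasure_eq_measure)
  finally show "emeasure (distr M M T) A = emeasure M A" .
qed simp

lemma Tpow: "\<omega> \<in> space M \<Longrightarrow> (T ^^ k) \<omega> = \<tau> (real k) \<omega>"
proof (induction k)
  case 0 then show ?case using tau_0[OF E] by simp
next
  case (Suc k)
  have "(T ^^ Suc k) \<omega> = \<tau> 1 (\<tau> (real k) \<omega>)" using Suc by simp
  also have "\<dots> = \<tau> (1 + real k) \<omega>" using tau_add[OF E Suc.prems] by simp
  finally show ?case by (simp add: add.commute)
qed

lemma Sint: "\<omega> \<in> space M \<Longrightarrow> integral {0..real n} (\<lambda>s. f s \<omega>) = (\<Sum>k<n. F ((T ^^ k) \<omega>))"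
proof (induction n)
  case 0 then show ?case by simp
next
  case (Suc n)
  have "integral {0..real n} (\<lambda>s. f s \<omega>) + integral {real n..real n + 1} (\<lambda>s. f s \<omega>)
      = integral {0..real n + 1} (\<lambda>s. f s \<omega>)"
    by (rule Henstock_Kurzweil_Integration.integral_combine) (auto intro: fint Suc.prems)
  moreover have "integral {real n..real n + 1} (\<lambda>s. f s \<omega>) = F ((T ^^ n) \<omega>)"
  proof -
    have "integral {0..1} ((\<lambda>s. f s \<omega>) \<circ> (+) (real n)) = integral {0 + real n..1 + real n} (\<lambda>s. f s \<omega>)"
      by (rule integral_shift_Icc_real)
    moreover have "((\<lambda>s. f s \<omega>) \<circ> (+) (real n)) = (\<lambda>s. f s (\<tau> (real n) \<omega>))"
      using fs[OF Suc.prems] by (auto simp: fun_eq_iff add.commute)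
    ultimately show ?thesis using Tpow[OF Suc.prems] by (simp add: F_def add.commute)
  qed
  ultimately show ?case using Suc by (simp add: add.commute)
qed

definition A where "A n \<omega> = integral {0..real n} (\<lambda>s. f s \<omega>) / real n"

lemma A_meas[measurable]: "(\<lambda>\<omega>. A n \<omega>) \<in> borel_measurable M"
proof -
  have Tj[measurable]: "(T ^^ j) \<in> measurable M M" for j using measurable_funpow_self[OF T_meas] .
  have "(\<lambda>\<omega>. (\<Sum>k<n. F ((T ^^ k) \<omega>)) / real n) \<in> borel_measurable M" by measurable
  then show ?thesis by (rule measurable_cong[THEN iffD1, rotated]) (simp add: A_def Sint)
qed

lemma shift_diff:
  assumes \<omega>: "\<omega> \<in> space M"
  shows "\<bar>integral {0..real n} (\<lambda>s. f s (\<tau> z \<omega>)) - integral {0..real n} (\<lambda>s. f s \<omega>)\<bar> \<le> 2 * R * \<bar>z\<bar>"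
proof -
  let ?g = "\<lambda>s. f s \<omega>"
  have int: "\<And>a b. ?g integrable_on {a..b}" using fint[OF \<omega>] .
  have bd: "\<And>s. \<bar>?g s\<bar> \<le> R" using fb[OF \<omega>] .
  have "integral {0..real n} (\<lambda>s. f s (\<tau> z \<omega>)) = integral {0..real n} (?g \<circ> (+) z)"
    using fs[OF \<omega>] by (intro integral_cong) (auto simp: add.commute)
  also have "\<dots> = integral {0 + z..real n + z} ?g" by (rule integral_shift_Icc_real)
  also have "\<dots> = sint ?g (real n + z) - sint ?g z" using sint_diff[OF int, of z "real n + z"] by simp
  finally have e1: "integral {0..real n} (\<lambda>s. f s (\<tau> z \<omega>)) = sint ?g (real n + z) - sint ?g z" .
  have e2: "integral {0..real n} ?g = sint ?g (real n) - sint ?g 0" using sint_diff[OF int, of 0 "real n"] by simp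
  have "\<bar>sint ?g (real n + z) - sint ?g (real n)\<bar> \<le> R * \<bar>z\<bar>" using sint_lip[OF int bd, of "real n + z" "real n"] by simp
  moreover have "\<bar>sint ?g z - sint ?g 0\<bar> \<le> R * \<bar>z\<bar>" using sint_lip[OF int bd, of z 0] by simp
  ultimately show ?thesis unfolding e1 e2 by linarith
qed

lemma A_inv: "\<omega> \<in> space M \<Longrightarrow> (\<lambda>n. A n (\<tau> z \<omega>) - A n \<omega>) \<longlonglongrightarrow> 0"
proof -
  assume \<omega>: "\<omega> \<in> space M"
  have "(\<lambda>n. 2 * R * \<bar>z\<bar> / real n) \<longlonglongrightarrow> 0"
    by (intro tendsto_divide_0[OF tendsto_const] filterlim_at_top_imp_at_infinity[OF filterlim_real_sequentially])
  then show ?thesis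
  proof (rule Lim_null_comparison[rotated])
    show "\<forall>\<^sub>F n in sequentially. norm (A n (\<tau> z \<omega>) - A n \<omega>) \<le> 2 * R * \<bar>z\<bar> / real n"
    proof (rule always_eventually, intro allI)
      fix n
      have "norm (A n (\<tau> z \<omega>) - A n \<omega>) = \<bar>integral {0..real n} (\<lambda>s. f s (\<tau> z \<omega>)) - integral {0..real n} (\<lambda>s. f s \<omega>)\<bar> / real n"
        by (simp add: A_def diff_divide_distrib[symmetric])
      also have "\<dots> \<le> 2 * R * \<bar>z\<bar> / real n" by (intro divide_right_mono shift_diff \<omega>) auto
      finally show "norm (A n (\<tau> z \<omega>) - A n \<omega>) \<le> 2 * R * \<bar>z\<bar> / real n" .
    qed
  qed
qed

end


context erg_setup
begin

definition D where "D (a::real) = {\<omega> \<in> space M. \<exists>q::rat. a < of_rat q \<and> (\<forall>N. \<exists>n\<ge>N. of_rat q < A n \<omega>)}"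

lemma D_meas[measurable]: "D a \<in> sets M"
  unfolding D_def by measurable

lemma D_shift:
  assumes \<omega>: "\<omega> \<in> space M" and D: "\<omega> \<in> D a"
  shows "\<tau> z \<omega> \<in> D a"
proof -
  obtain q :: rat where q: "a < of_rat q" "\<forall>N. \<exists>n\<ge>N. of_rat q < A n \<omega>" using D by (auto simp: D_def)
  obtain q' :: rat where q': "a < of_rat q'" "of_rat q' < (of_rat q :: real)" using of_rat_dense[OF q(1)] by blast
  have "eventually (\<lambda>n. dist (A n (\<tau> z \<omega>) - A n \<omega>) 0 < of_rat q - of_rat q') sequentially"
    using A_inv[OF \<omega>, of z] q' unfolding tendsto_iff by simp
  then obtain N0 where N0: "\<forall>n\<ge>N0. \<bar>A n (\<tau> z \<omega>) - A n \<omega>\<bar> < of_rat q - of_rat q'"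
    by (auto simp: eventually_sequentially dist_real_def)
  have "\<forall>N. \<exists>n\<ge>N. of_rat q' < A n (\<tau> z \<omega>)"
  proof
    fix N
    obtain n where n: "n \<ge> max N N0" "of_rat q < A n \<omega>" using q(2) by blast
    then have "\<bar>A n (\<tau> z \<omega>) - A n \<omega>\<bar> < of_rat q - of_rat q'" using N0 by auto
    then show "\<exists>n\<ge>N. of_rat q' < A n (\<tau> z \<omega>)" using n by (intro exI[of _ n]) auto
  qed
  then show ?thesis using q' tau_space[OF E \<omega>] by (auto simp: D_def)
qed

lemma D_inv: "\<omega> \<in> space M \<Longrightarrow> \<tau> z \<omega> \<in> D a \<longleftrightarrow> \<omega> \<in> D a"
proof
  assume \<omega>: "\<omega> \<in> space M" and "\<tau> z \<omega> \<in> D a"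
  then have "\<tau> (- z) (\<tau> z \<omega>) \<in> D a" using D_shift tau_space[OF E \<omega>] by blast
  moreover have "\<tau> (- z) (\<tau> z \<omega>) = \<omega>" using tau_add[OF E \<omega>, of "- z" z] tau_0[OF E \<omega>] by simp
  ultimately show "\<omega> \<in> D a" by simp
qed (rule D_shift)

definition EF where "EF = (\<integral>\<omega>. F \<omega> \<partial>M)"

lemma D_zero:
  assumes a: "EF < a"
  shows "D a \<in> null_sets M"
proof -
  have "measure M (D a) = 0 \<or> measure M (D a) = 1"
    by (rule invariant_01[OF E D_meas]) (rule D_inv)
  moreover have "measure M (D a) \<noteq> 1"
  proof
    assume "measure M (D a) = 1"
    then have ae: "AE \<omega> in M. \<omega> \<in> D a" by (rule AE_prob_1)
    have "AE \<omega> in M. \<exists>k\<ge>1. a * real k < (\<Sum>j<k. F ((T ^^ j) \<omega>))"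
      using ae AE_space
    proof eventually_elim
      case (elim \<omega>)
      then obtain q :: rat where q: "a < of_rat q" "\<forall>N. \<exists>n\<ge>N. of_rat q < A n \<omega>" by (auto simp: D_def)
      then obtain n where n: "n \<ge> 1" "of_rat q < A n \<omega>" by blast
      then have "a < A n \<omega>" using q(1) by simp
      then have "a * real n < integral {0..real n} (\<lambda>s. f s \<omega>)"
        using n(1) by (simp add: A_def field_simps)
      then show ?case using Sint[OF elim(2)] n(1) by (intro exI[of _ n]) simp
    qed
    then have "a \<le> EF" unfolding EF_def
      by (rule garsia_mean[OF T_meas T_distr F_meas F_bound, rotated])
    then show False using a by simp
  qed
  ultimately have "measure M (D a) = 0" by simp
  then show ?thesis by (simp add: emeasure_eq_measure null_sets_def)
qed

lemma ERG1: "AE \<omega> in M. \<forall>q::rat. EF < of_rat q \<longrightarrow> (\<exists>N. \<forall>n\<ge>N. A n \<omega> \<le> of_rat q)"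
proof (subst AE_all_countable, intro allI)
  fix q :: rat
  show "AE \<omega> in M. EF < of_rat q \<longrightarrow> (\<exists>N. \<forall>n\<ge>N. A n \<omega> \<le> of_rat q)"
  proof (cases "EF < of_rat q")
    case True
    define a where "a = (EF + of_rat q) / 2"
    have "EF < a" "a < of_rat q" using True by (auto simp: a_def)
    then have nD: "AE \<omega> in M. \<omega> \<notin> D a" using D_zero AE_not_in by blast
    show ?thesis using nD AE_space
    proof eventually_elim
      case (elim \<omega>)
      show ?case
      proof (rule impI, rule ccontr)
        assume "\<not> (\<exists>N. \<forall>n\<ge>N. A n \<omega> \<le> of_rat q)"
        then have "\<forall>N. \<exists>n\<ge>N. of_rat q < A n \<omega>" by (auto simp: not_le)
        then have "\<omega> \<in> D a" using \<open>a < of_rat q\<close> elim(2) by (auto simp: D_def)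
        then show False using elim(1) by simp
      qed
    qed
  qed simp
qed

end


lemma cont_avg:
  fixes g :: "real \<Rightarrow> real"
  assumes int: "\<And>a b. g integrable_on {a..b}" and bd: "\<And>s. \<bar>g s\<bar> \<le> R"
    and lim: "(\<lambda>n. integral {0..real n} g / real n) \<longlonglongrightarrow> L"
  shows "((\<lambda>t. integral {0..t} g / t) \<longlongrightarrow> L) at_top"
proof -
  define N where "N t = nat \<lfloor>t\<rfloor>" for t :: real
  have fN: "filterlim N sequentially at_top"
    unfolding N_def by (rule filterlim_compose[OF filterlim_nat_sequentially filterlim_floor_sequentially])
  have l1: "((\<lambda>t. integral {0..real (N t)} g / real (N t)) \<longlongrightarrow> L) at_top"
    by (rule filterlim_compose[OF lim fN])
  have R0: "R \<ge> 0" using bd[of 0] by simp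
  have l2: "((\<lambda>t. 2 * R / t) \<longlongrightarrow> 0) at_top"
    by (intro tendsto_divide_0[OF tendsto_const] filterlim_at_top_imp_at_infinity[OF filterlim_ident])
  have ev: "eventually (\<lambda>t. norm (integral {0..t} g / t - integral {0..real (N t)} g / real (N t)) \<le> 2 * R / t) at_top"
    using eventually_ge_at_top[of "1::real"]
  proof eventually_elim
    case (elim t)
    define n where "n = real (N t)"
    have n1: "1 \<le> n" and nt: "n \<le> t" and tn: "t < n + 1"
      using elim by (auto simp: n_def N_def)
    have "integral {0..n} g + integral {n..t} g = integral {0..t} g"
      by (rule Henstock_Kurzweil_Integration.integral_combine) (use n1 nt int in auto)
    then have d: "integral {0..t} g - integral {0..n} g = integral {n..t} g" by simp
    have b1: "\<bar>integral {n..t} g\<bar> \<le> R" 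
    proof -
      have "\<bar>integral {n..t} g\<bar> \<le> R * (t - n)" by (rule integral_abs_bound[OF int nt bd])
      also have "\<dots> \<le> R * 1" using tn nt R0 by (intro mult_left_mono) auto
      finally show ?thesis by simp
    qed
    have b2: "\<bar>integral {0..n} g\<bar> \<le> R * n" using integral_abs_bound[OF int _ bd, of 0 n] n1 by simp
    have tpos: "t > 0" using elim by simp
    have eq: "integral {0..t} g / t - integral {0..n} g / n
        = (integral {0..t} g - integral {0..n} g) / t + integral {0..n} g * ((n - t) / (t * n))"
      using tpos n1 by (simp add: field_simps)
    have c1: "\<bar>(integral {0..t} g - integral {0..n} g) / t\<bar> \<le> R / t"
      using b1 tpos d by (simp add: divide_right_mono)
    have c2: "\<bar>integral {0..n} g * ((n - t) / (t * n))\<bar> \<le> R / t"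
    proof -
      have "\<bar>integral {0..n} g * ((n - t) / (t * n))\<bar> = \<bar>integral {0..n} g\<bar> * ((t - n) / (t * n))"
        using tpos n1 nt by (simp add: abs_mult abs_divide)
      also have "\<dots> \<le> (R * n) * ((t - n) / (t * n))"
        using b2 tpos n1 nt by (intro mult_right_mono) auto
      also have "\<dots> = R * (t - n) / t" using n1 tpos by (simp add: field_simps)
      also have "\<dots> \<le> R * 1 / t" using tpos tn nt R0 by (intro divide_right_mono mult_left_mono) auto
      finally show ?thesis by simp
    qed
    have c3: "\<bar>(integral {0..t} g - integral {0..n} g) / t + integral {0..n} g * ((n - t) / (t * n))\<bar>
       \<le> \<bar>(integral {0..t} g - integral {0..n} g) / t\<bar> + \<bar>integral {0..n} g * ((n - t) / (t * n))\<bar>"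
      by (rule abs_triangle_ineq)
    have "\<bar>(integral {0..t} g - integral {0..n} g) / t + integral {0..n} g * ((n - t) / (t * n))\<bar> \<le> R / t + R / t"
      by (rule order_trans[OF c3 add_mono[OF c1 c2]])
    then have "\<bar>integral {0..t} g / t - integral {0..n} g / n\<bar> \<le> 2 * R / t" unfolding eq by simp
    then show ?case by (simp add: n_def)
  qed
  have "((\<lambda>t. integral {0..t} g / t - integral {0..real (N t)} g / real (N t)) \<longlongrightarrow> 0) at_top"
    by (rule Lim_null_comparison[OF ev l2])
  then show ?thesis by (rule Lim_transform[OF l1])
qed

context erg_setup
begin

lemma ERG: "AE \<omega> in M. ((\<lambda>t. integral {0..t} (\<lambda>s. f s \<omega>) / t) \<longlongrightarrow> EF) at_top"
proof -
  interpret neg: erg_setup M \<tau> "\<lambda>s \<omega>. - f s \<omega>" R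
  proof
    show "ergodic_group M \<tau>" by (rule E)
    have "(\<lambda>x. - (case x of (\<omega>, s) \<Rightarrow> f s \<omega>)) \<in> borel_measurable (M \<Otimes>\<^sub>M lborel)"
      using fm by measurable
    then show "(\<lambda>(\<omega>, s). - f s \<omega>) \<in> borel_measurable (M \<Otimes>\<^sub>M lborel)"
      by (simp add: case_prod_beta')
  qed (use fb fs in auto)
  have negA: "neg.A n \<omega> = - A n \<omega>" for n \<omega> by (simp add: neg.A_def A_def)
  have negEF: "neg.EF = - EF" by (simp add: neg.EF_def EF_def neg.F_def F_def)
  show ?thesis
    using ERG1 neg.ERG1 AE_space
  proof eventually_elim
    case (elim \<omega>)
    have up: "\<And>q::rat. EF < of_rat q \<Longrightarrow> \<exists>N. \<forall>n\<ge>N. A n \<omega> \<le> of_rat q" using elim(1) by blast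
    have lo: "\<And>q::rat. - EF < of_rat q \<Longrightarrow> \<exists>N. \<forall>n\<ge>N. - A n \<omega> \<le> of_rat q"
      using elim(2) by (simp add: negA negEF)
    have "(\<lambda>n. A n \<omega>) \<longlonglongrightarrow> EF"
    proof (rule order_tendstoI)
      fix a assume a: "a < EF"
      obtain q :: rat where q: "- EF < of_rat q" "of_rat q < - a" using of_rat_dense[of "- EF" "- a"] a by auto
      obtain N where "\<forall>n\<ge>N. - A n \<omega> \<le> of_rat q" using lo[OF q(1)] by blast
      then show "eventually (\<lambda>n. a < A n \<omega>) sequentially"
        unfolding eventually_sequentially using q(2) by (intro exI[of _ N]) force
    next
      fix a assume a: "EF < a"
      obtain q :: rat where q: "EF < of_rat q" "of_rat q < a" using of_rat_dense[OF a] by auto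
      obtain N where "\<forall>n\<ge>N. A n \<omega> \<le> of_rat q" using up[OF q(1)] by blast
      then show "eventually (\<lambda>n. A n \<omega> < a) sequentially"
        unfolding eventually_sequentially using q(2) by (intro exI[of _ N]) force
    qed
    then show ?case
      by (intro cont_avg[where R=R] fint elim(3) fb) (simp add: A_def)
  qed
qed

lemma EF_nonneg: "(\<And>\<omega> s. \<omega> \<in> space M \<Longrightarrow> 0 \<le> f s \<omega>) \<Longrightarrow> 0 \<le> EF"
  unfolding EF_def F_def
  by (intro integral_nonneg_AE AE_I2 Henstock_Kurzweil_Integration.integral_nonneg fint) auto

end


definition bfun :: "real \<Rightarrow> (real \<Rightarrow> real \<Rightarrow> 'a \<Rightarrow> real) \<Rightarrow> real \<Rightarrow> 'a \<Rightarrow> real" where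
  "bfun mu Hf s \<omega> = measure lborel {p. 0 \<le> p \<and> Hf p s \<omega> < mu}"

lemma bfun_core: "core (\<lambda>p s. Hf p s \<omega>) mu \<Longrightarrow> core.b (\<lambda>p s. Hf p s \<omega>) mu s = bfun mu Hf s \<omega>"
  using core.b_def[of "\<lambda>p s. Hf p s \<omega>" mu s] by (simp add: bfun_def)

lemma bfun_meas:
  assumes "H_meas M Hf"
  shows "(\<lambda>(\<omega>, s). bfun mu Hf s \<omega>) \<in> borel_measurable (M \<Otimes>\<^sub>M lborel)"
proof -
  have hm[measurable]: "(\<lambda>(py, \<omega>). Hf (fst py) (snd py) \<omega>) \<in> borel_measurable ((borel :: (real \<times> real) measure) \<Otimes>\<^sub>M M)"
    using assms by (simp add: H_meas_def)
  have g: "(\<lambda>x::('a \<times> real) \<times> real. ((snd x, snd (fst x)), fst (fst x))) \<in> measurable ((M \<Otimes>\<^sub>M lborel) \<Otimes>\<^sub>M lborel) ((borel :: (real \<times> real) measure) \<Otimes>\<^sub>M M)"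
  proof (intro measurable_Pair)
    have "(\<lambda>x::('a \<times> real) \<times> real. (snd x, snd (fst x))) \<in> measurable ((M \<Otimes>\<^sub>M lborel) \<Otimes>\<^sub>M lborel) (borel \<Otimes>\<^sub>M borel)"
      by measurable
    then show "(\<lambda>x::('a \<times> real) \<times> real. (snd x, snd (fst x))) \<in> measurable ((M \<Otimes>\<^sub>M lborel) \<Otimes>\<^sub>M lborel) (borel :: (real \<times> real) measure)"
      by (simp add: borel_prod)
  qed measurable
  have hx: "(\<lambda>x::('a \<times> real) \<times> real. Hf (snd x) (snd (fst x)) (fst (fst x))) \<in> borel_measurable ((M \<Otimes>\<^sub>M lborel) \<Otimes>\<^sub>M lborel)"
    using measurable_comp[OF g hm] by (simp add: comp_def)
  define Q where "Q = {x \<in> space ((M \<Otimes>\<^sub>M lborel) \<Otimes>\<^sub>M lborel). 0 \<le> snd x \<and> Hf (snd x) (snd (fst x)) (fst (fst x)) < mu}"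
  have Qm: "Q \<in> sets ((M \<Otimes>\<^sub>M lborel) \<Otimes>\<^sub>M lborel)"
    unfolding Q_def using hx by measurable
  have "(\<lambda>x. emeasure lborel (Pair x -` Q)) \<in> borel_measurable (M \<Otimes>\<^sub>M lborel)"
    by (rule lborel.measurable_emeasure_Pair[OF Qm])
  then have "(\<lambda>x. enn2real (emeasure lborel (Pair x -` Q))) \<in> borel_measurable (M \<Otimes>\<^sub>M lborel)"
    by measurable
  then show ?thesis
  proof (rule measurable_cong[THEN iffD1, rotated])
    fix x :: "'a \<times> real" assume x: "x \<in> space (M \<Otimes>\<^sub>M lborel)"
    then have "Pair x -` Q = {p. 0 \<le> p \<and> Hf p (snd x) (fst x) < mu}"
      by (auto simp: Q_def space_pair_measure)
    then show "enn2real (emeasure lborel (Pair x -` Q)) = (case x of (\<omega>, s) \<Rightarrow> bfun mu Hf s \<omega>)"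
      by (auto simp: bfun_def measure_def split: prod.splits)
  qed
qed

lemma bfun_nonneg: "0 \<le> bfun mu Hf s \<omega>"
  by (simp add: bfun_def)

lemma bfun_bound:
  assumes "H3 M Hf"
  obtains R where "\<And>\<omega> s. \<omega> \<in> space M \<Longrightarrow> \<bar>bfun mu Hf s \<omega>\<bar> \<le> R"
proof -
  obtain R0 where R0: "\<forall>p s. \<forall>\<omega>\<in>space M. \<bar>p\<bar> \<ge> R0 \<longrightarrow> Hf p s \<omega> \<ge> mu"
    using assms unfolding H3_def by blast
  have "\<bar>bfun mu Hf s \<omega>\<bar> \<le> max R0 0" if \<omega>: "\<omega> \<in> space M" for \<omega> s
  proof -
    let ?S = "{p. 0 \<le> p \<and> Hf p s \<omega> < mu}"
    have sub: "?S \<subseteq> {0..max R0 0}"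
    proof
      fix p assume "p \<in> ?S"
      then have "0 \<le> p" "Hf p s \<omega> < mu" by auto
      then have "\<not> \<bar>p\<bar> \<ge> R0"
      proof (intro notI)
        assume "\<bar>p\<bar> \<ge> R0"
        then have "Hf p s \<omega> \<ge> mu" using R0 \<omega> by blast
        then show False using \<open>Hf p s \<omega> < mu\<close> by simp
      qed
      then show "p \<in> {0..max R0 0}" using \<open>0 \<le> p\<close> by auto
    qed
    have "measure lborel ?S \<le> max R0 0"
    proof (cases "?S \<in> sets lborel")
      case True
      have "measure lborel ?S \<le> measure lborel {0..max R0 0}"
        by (rule measure_mono_fmeasurable[OF sub True]) (auto intro!: fmeasurableI simp: emeasure_lborel_Icc_eq)
      then show ?thesis by simp
    next
      case False
      then show ?thesis by (simp add: measure_notin_sets)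
    qed
    then show ?thesis by (simp add: bfun_def)
  qed
  then show ?thesis using that by blast
qed

lemma bfun_shift:
  assumes "H8 M \<tau> Hf" "\<omega> \<in> space M"
  shows "bfun mu Hf (s + z) \<omega> = bfun mu Hf s (\<tau> z \<omega>)"
  using assms unfolding H8_def bfun_def by simp


lemma ergodic_bfun:
  assumes P: "prob_space M" and E: "ergodic_group M \<tau>" and hm: "H_meas M Hf" and h3: "H3 M Hf" and h8: "H8 M \<tau> Hf"
  shows "\<exists>\<beta>\<ge>0. AE \<omega> in M. ((\<lambda>t. integral {0..t} (\<lambda>s. bfun mu Hf s \<omega>) / t) \<longlongrightarrow> \<beta>) at_top"
    and "\<And>\<omega> a c. \<omega> \<in> space M \<Longrightarrow> (\<lambda>s. bfun mu Hf s \<omega>) integrable_on {a..c}"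
proof -
  obtain R where R: "\<And>\<omega> s. \<omega> \<in> space M \<Longrightarrow> \<bar>bfun mu Hf s \<omega>\<bar> \<le> R" using bfun_bound[OF h3] by blast
  have "erg_setup M \<tau> (\<lambda>s \<omega>. bfun mu Hf s \<omega>) R"
  proof (rule erg_setup.intro[OF P], rule erg_setup_axioms.intro)
    show "ergodic_group M \<tau>" by (rule E)
    show "(\<lambda>(\<omega>, s). bfun mu Hf s \<omega>) \<in> borel_measurable (M \<Otimes>\<^sub>M lborel)" by (rule bfun_meas[OF hm])
    show "\<And>\<omega> s. \<omega> \<in> space M \<Longrightarrow> \<bar>bfun mu Hf s \<omega>\<bar> \<le> R" by (rule R)
    show "\<And>\<omega> s z. \<omega> \<in> space M \<Longrightarrow> bfun mu Hf (s + z) \<omega> = bfun mu Hf s (\<tau> z \<omega>)"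
      by (rule bfun_shift[OF h8])
  qed
  then interpret erg_setup M \<tau> "\<lambda>s \<omega>. bfun mu Hf s \<omega>" R .
  show "\<exists>\<beta>\<ge>0. AE \<omega> in M. ((\<lambda>t. integral {0..t} (\<lambda>s. bfun mu Hf s \<omega>) / t) \<longlongrightarrow> \<beta>) at_top"
    using ERG EF_nonneg[OF bfun_nonneg] by blast
  show "\<And>\<omega> a c. \<omega> \<in> space M \<Longrightarrow> (\<lambda>s. bfun mu Hf s \<omega>) integrable_on {a..c}"
    by (rule fint)
qed


lemma sint_0[simp]: "sint g 0 = 0" by (simp add: sint_def)

lemma sint_pos: "0 \<le> u \<Longrightarrow> sint g u = integral {0..u} g" by (simp add: sint_def)

lemma LL:
  fixes g bA bB :: "real \<Rightarrow> real"
  assumes intg: "\<And>a c. g integrable_on {a..c}" and intA: "\<And>a c. bA integrable_on {a..c}"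
    and intB: "\<And>a c. bB integrable_on {a..c}"
    and K: "K \<ge> 0" and gA: "\<And>s. s \<ge> K \<Longrightarrow> g s = bA s" and gB: "\<And>s. s \<le> - K \<Longrightarrow> g s = bB (- s)"
    and lA: "((\<lambda>t. integral {0..t} bA / t) \<longlongrightarrow> \<alpha>) at_top"
    and lB: "((\<lambda>t. integral {0..t} bB / t) \<longlongrightarrow> \<beta>) at_top"
  shows "((\<lambda>t. sint g (t * c) / t) \<longlongrightarrow> (if 0 \<le> c then \<alpha> * c else \<beta> * c)) at_top"
proof (cases "c = 0")
  case True then show ?thesis by simp
next
  case c0: False
  show ?thesis
  proof (cases "c > 0")
    case cpos: True
    define C where "C = sint g K - sint bA K"
    have eqA: "sint g u = C + integral {0..u} bA" if "u \<ge> K" for u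
    proof -
      have "integral {K..u} g = integral {K..u} bA" by (rule integral_cong) (use gA in auto)
      then have "sint g u - sint g K = sint bA u - sint bA K"
        using sint_diff[OF intg that] sint_diff[OF intA that] by simp
      then show ?thesis using sint_pos[of u bA] that K by (simp add: C_def)
    qed
    have fl: "filterlim (\<lambda>t. t * c) at_top at_top"
      using filterlim_tendsto_pos_mult_at_top[OF tendsto_const cpos filterlim_ident] by (simp add: mult.commute)
    have l1: "((\<lambda>t. integral {0..t * c} bA / (t * c)) \<longlongrightarrow> \<alpha>) at_top"
      by (rule filterlim_compose[OF lA fl])
    have l2: "((\<lambda>t. C / t + c * (integral {0..t * c} bA / (t * c))) \<longlongrightarrow> 0 + c * \<alpha>) at_top"
      by (intro tendsto_intros l1 tendsto_divide_0[OF tendsto_const] filterlim_at_top_imp_at_infinity[OF filterlim_ident])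
    have ev: "eventually (\<lambda>t. C / t + c * (integral {0..t * c} bA / (t * c)) = sint g (t * c) / t) at_top"
      using eventually_ge_at_top[of "K / c + 1"]
    proof eventually_elim
      case (elim t)
      have tpos: "t > 0" using elim K cpos by (smt (verit) divide_nonneg_pos)
      have "t * c \<ge> K" using elim cpos by (simp add: field_simps)
      then show ?case using eqA[of "t * c"] tpos cpos by (simp add: field_simps)
    qed
    show ?thesis using Lim_transform_eventually[OF l2 ev] cpos by (simp add: mult.commute)
  next
    case False
    then have cneg: "c < 0" using c0 by simp
    define C where "C = sint g (- K) + sint bB K"
    have eqB: "sint g u = C - integral {0..- u} bB" if "u \<le> - K" for u
    proof -
      have "integral {u..- K} g = integral {u..- K} (\<lambda>s. bB (- s))" by (rule integral_cong) (use gB in auto)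
      also have "\<dots> = integral {K..- u} bB"
        using Henstock_Kurzweil_Integration.integral_reflect_real[of "- u" K bB] by simp
      finally have "sint g (- K) - sint g u = sint bB (- u) - sint bB K"
        using sint_diff[OF intg that] sint_diff[OF intB, of K "- u"] that by simp
      then show ?thesis using sint_pos[of "- u" bB] that K by (simp add: C_def)
    qed
    have cpos': "- c > 0" using cneg by simp
    have fl: "filterlim (\<lambda>t. t * (- c)) at_top at_top"
      using filterlim_tendsto_pos_mult_at_top[OF tendsto_const cpos' filterlim_ident] by (simp add: mult.commute)
    have l1: "((\<lambda>t. integral {0..t * (- c)} bB / (t * (- c))) \<longlongrightarrow> \<beta>) at_top"
      by (rule filterlim_compose[OF lB fl])
    have l2: "((\<lambda>t. C / t - (- c) * (integral {0..t * (- c)} bB / (t * (- c)))) \<longlongrightarrow> 0 - (- c) * \<beta>) at_top"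
      by (intro tendsto_intros l1 tendsto_divide_0[OF tendsto_const] filterlim_at_top_imp_at_infinity[OF filterlim_ident])
    have ev: "eventually (\<lambda>t. C / t - (- c) * (integral {0..t * (- c)} bB / (t * (- c))) = sint g (t * c) / t) at_top"
      using eventually_ge_at_top[of "K / (- c) + 1"]
    proof eventually_elim
      case (elim t)
      have tpos: "t > 0" using elim K cpos' by (smt (verit) divide_nonneg_pos)
      have "t * c \<le> - K" using elim cneg by (simp add: field_simps)
      then show ?case using eqB[of "t * c"] tpos cneg by (simp add: field_simps)
    qed
    show ?thesis using Lim_transform_eventually[OF l2 ev] cneg by (simp add: mult.commute)
  qed
qed


lemma core_of_H:
  assumes H: "H1to6 M Hf" and \<omega>: "\<omega> \<in> space M" and sub: "\<forall>s. Hf 0 s \<omega> < mu"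
  shows "core (\<lambda>p s. Hf p s \<omega>) mu"
proof
  show "\<exists>L. \<forall>p q s. \<bar>Hf p s \<omega> - Hf q s \<omega>\<bar> \<le> L * \<bar>p - q\<bar>"
    using H \<omega> unfolding H1to6_def H1_def by blast
  show "\<exists>w. modulus w \<and> (\<forall>p x y. \<bar>Hf p y \<omega> - Hf p x \<omega>\<bar> \<le> w (\<bar>x - y\<bar> * (1 + \<bar>p\<bar>)))"
    using H \<omega> unfolding H1to6_def H4_def by blast
  show "\<forall>K. \<exists>R. \<forall>p s. R \<le> \<bar>p\<bar> \<longrightarrow> K \<le> Hf p s \<omega>"
    using H \<omega> unfolding H1to6_def H3_def by blast
  show "\<forall>s. convex_on UNIV (\<lambda>p. Hf p s \<omega>)"
    using H \<omega> unfolding H1to6_def H5_def by blast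
  show "\<forall>p s. Hf 0 s \<omega> \<le> Hf p s \<omega>"
    using H \<omega> unfolding H1to6_def H6_def by blast
qed (rule sub)

lemma core_refl:
  assumes "core G mu"
  shows "core (\<lambda>p s. G (- p) (- s)) mu"
proof -
  interpret core G mu by fact
  show ?thesis
  proof
    obtain L where L: "\<forall>p q s. \<bar>G p s - G q s\<bar> \<le> L * \<bar>p - q\<bar>" using lip by blast
    show "\<exists>L. \<forall>p q s. \<bar>G (- p) (- s) - G (- q) (- s)\<bar> \<le> L * \<bar>p - q\<bar>"
    proof (intro exI allI)
      fix p q s
      have "\<bar>G (- p) (- s) - G (- q) (- s)\<bar> \<le> L * \<bar>(- p) - (- q)\<bar>" using L by blast
      then show "\<bar>G (- p) (- s) - G (- q) (- s)\<bar> \<le> L * \<bar>p - q\<bar>" by (simp add: abs_minus_commute)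
    qed
    obtain w where w: "modulus w" "\<forall>p x y. \<bar>G p y - G p x\<bar> \<le> w (\<bar>x - y\<bar> * (1 + \<bar>p\<bar>))" using modu by blast
    show "\<exists>w. modulus w \<and> (\<forall>p x y. \<bar>G (- p) (- y) - G (- p) (- x)\<bar> \<le> w (\<bar>x - y\<bar> * (1 + \<bar>p\<bar>)))"
    proof (intro exI conjI allI)
      fix p x y
      have "\<bar>G (- p) (- y) - G (- p) (- x)\<bar> \<le> w (\<bar>(- x) - (- y)\<bar> * (1 + \<bar>- p\<bar>))" using w(2) by blast
      then show "\<bar>G (- p) (- y) - G (- p) (- x)\<bar> \<le> w (\<bar>x - y\<bar> * (1 + \<bar>p\<bar>))" by (simp add: abs_minus_commute)
    qed (rule w(1))
    show "\<forall>K. \<exists>R. \<forall>p s. R \<le> \<bar>p\<bar> \<longrightarrow> K \<le> G (- p) (- s)"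
    proof (intro allI)
      fix K
      obtain R where "\<forall>p s. R \<le> \<bar>p\<bar> \<longrightarrow> K \<le> G p s" using coer by blast
      then show "\<exists>R. \<forall>p s. R \<le> \<bar>p\<bar> \<longrightarrow> K \<le> G (- p) (- s)" by (intro exI[of _ R]) (metis abs_minus_cancel)
    qed
    show "\<forall>s. convex_on UNIV (\<lambda>p. G (- p) (- s))"
    proof
      fix s
      have c: "convex_on UNIV (\<lambda>p. G p (- s))" using conv by blast
      show "convex_on UNIV (\<lambda>p. G (- p) (- s))"
        unfolding convex_on_def
      proof (intro conjI ballI allI impI convex_UNIV)
        fix x y u v :: real assume uv: "0 \<le> u" "0 \<le> v" "u + v = 1"
        have "G (u *\<^sub>R (- x) + v *\<^sub>R (- y)) (- s) \<le> u * G (- x) (- s) + v * G (- y) (- s)"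
          using c uv unfolding convex_on_def by blast
        then show "G (- (u *\<^sub>R x + v *\<^sub>R y)) (- s) \<le> u * G (- x) (- s) + v * G (- y) (- s)" by simp
      qed
    qed
    show "\<forall>p s. G (- 0) (- s) \<le> G (- p) (- s)" using min0 by simp
    show "\<forall>s. G (- 0) (- s) < mu" using sub by simp
  qed
qed

definition Jl :: "real \<Rightarrow> real \<Rightarrow> real \<Rightarrow> real" where
  "Jl \<alpha> \<beta> c = (if 0 \<le> c then \<alpha> * c else \<beta> * c)"

lemma Jl_mono: "0 \<le> \<alpha> \<Longrightarrow> 0 \<le> \<beta> \<Longrightarrow> x \<le> y \<Longrightarrow> Jl \<alpha> \<beta> x \<le> Jl \<alpha> \<beta> y"
  unfolding Jl_def by (auto intro: mult_left_mono order_trans[of _ 0] simp: mult_nonneg_nonneg mult_nonneg_nonpos)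

lemma metric_limit:
  assumes co: "core (\<lambda>p s. Hf p s \<omega>) mu"
    and K: "K \<ge> 0" and hA: "\<And>s p. s \<ge> K \<Longrightarrow> Hf p s \<omega> = HA p s \<omega>"
    and hB: "\<And>s p. s \<le> - K \<Longrightarrow> Hf p s \<omega> = HB p s \<omega>"
    and intA: "\<And>a c. (\<lambda>s. bfun mu HA s \<omega>) integrable_on {a..c}"
    and intB: "\<And>a c. (\<lambda>s. bfun mu HB (- s) \<omega>) integrable_on {a..c}"
    and lA: "((\<lambda>t. integral {0..t} (\<lambda>s. bfun mu HA s \<omega>) / t) \<longlongrightarrow> \<alpha>) at_top"
    and lB: "((\<lambda>t. integral {0..t} (\<lambda>s. bfun mu HB (- s) \<omega>) / t) \<longlongrightarrow> \<beta>) at_top"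
    and xy: "x \<le> y"
  shows "((\<lambda>t. metric_fn mu Hf (t * y) (t * x) \<omega> / t) \<longlongrightarrow> Jl \<alpha> \<beta> y - Jl \<alpha> \<beta> x) at_top"
proof -
  interpret core "\<lambda>p s. Hf p s \<omega>" mu by (rule co)
  define g where "g s = bfun mu Hf s \<omega>" for s
  have bg: "b = g" using bfun_core[of Hf \<omega> mu, OF co] by (auto simp: g_def fun_eq_iff)
  have intg: "\<And>a c. g integrable_on {a..c}" using b_int bg by simp
  have gA: "g s = bfun mu HA s \<omega>" if "s \<ge> K" for s using hA[OF that] by (simp add: g_def bfun_def)
  have gB: "g s = bfun mu HB (- (- s)) \<omega>" if "s \<le> - K" for s using hB[OF that] by (simp add: g_def bfun_def)
  have ly: "((\<lambda>t. sint g (t * y) / t) \<longlongrightarrow> Jl \<alpha> \<beta> y) at_top"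
    unfolding Jl_def by (rule LL[OF intg intA intB K gA gB lA lB])
  have lx: "((\<lambda>t. sint g (t * x) / t) \<longlongrightarrow> Jl \<alpha> \<beta> x) at_top"
    unfolding Jl_def by (rule LL[OF intg intA intB K gA gB lA lB])
  have l: "((\<lambda>t. sint g (t * y) / t - sint g (t * x) / t) \<longlongrightarrow> Jl \<alpha> \<beta> y - Jl \<alpha> \<beta> x) at_top"
    by (rule tendsto_diff[OF ly lx])
  have ev: "eventually (\<lambda>t. sint g (t * y) / t - sint g (t * x) / t = metric_fn mu Hf (t * y) (t * x) \<omega> / t) at_top"
    using eventually_gt_at_top[of "0::real"]
  proof eventually_elim
    case (elim t)
    have txy: "t * x \<le> t * y" using elim xy by (simp add: mult_left_mono)
    have "metric_fn mu Hf (t * y) (t * x) \<omega> = Sup {v (t * y) - v (t * x) | v. glob_lip v \<and> visc_sub (\<lambda>p s. Hf p s \<omega>) v mu}"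
      by (simp add: metric_fn_def subsols_def)
    also have "\<dots> = sint b (t * y) - sint b (t * x)" by (rule metric_eq[OF txy])
    finally show ?case using bg by (simp add: diff_divide_distrib)
  qed
  show ?thesis by (rule Lim_transform_eventually[OF l ev])
qed


definition srefl :: "(real \<Rightarrow> real \<Rightarrow> 'a \<Rightarrow> real) \<Rightarrow> real \<Rightarrow> real \<Rightarrow> 'a \<Rightarrow> real" where
  "srefl Hf = (\<lambda>p s \<omega>. Hf p (- s) \<omega>)"
definition prefl :: "(real \<Rightarrow> real \<Rightarrow> 'a \<Rightarrow> real) \<Rightarrow> real \<Rightarrow> real \<Rightarrow> 'a \<Rightarrow> real" where
  "prefl Hf = (\<lambda>p s \<omega>. Hf (- p) s \<omega>)"

lemma Hmeas_trans:
  assumes hm: "H_meas M Hf" and a: "continuous_on UNIV a" and c: "continuous_on UNIV c"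
  shows "H_meas M (\<lambda>p s \<omega>. Hf (a p) (c s) \<omega>)"
proof -
  have h[measurable]: "(\<lambda>(py, \<omega>). Hf (fst py) (snd py) \<omega>) \<in> borel_measurable ((borel :: (real \<times> real) measure) \<Otimes>\<^sub>M M)"
    using hm by (simp add: H_meas_def)
  have ac: "(\<lambda>py::real \<times> real. (a (fst py), c (snd py))) \<in> borel_measurable borel"
    by (intro borel_measurable_continuous_onI continuous_on_Pair continuous_on_compose2[OF a] continuous_on_compose2[OF c] continuous_intros) auto
  have g: "(\<lambda>x::(real \<times> real) \<times> 'a. ((a (fst (fst x)), c (snd (fst x))), snd x)) \<in> measurable ((borel :: (real \<times> real) measure) \<Otimes>\<^sub>M M) ((borel :: (real \<times> real) measure) \<Otimes>\<^sub>M M)"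
  proof (intro measurable_Pair)
    show "(\<lambda>x::(real \<times> real) \<times> 'a. (a (fst (fst x)), c (snd (fst x)))) \<in> borel_measurable ((borel :: (real \<times> real) measure) \<Otimes>\<^sub>M M)"
      using measurable_comp[OF measurable_fst ac] by (simp add: comp_def)
  qed measurable
  have "(\<lambda>x. (\<lambda>(py, \<omega>). Hf (fst py) (snd py) \<omega>) (((a (fst (fst x)), c (snd (fst x))), snd x))) \<in> borel_measurable ((borel :: (real \<times> real) measure) \<Otimes>\<^sub>M M)"
    using measurable_comp[OF g h] by (simp add: comp_def)
  then show ?thesis unfolding H_meas_def by (simp add: case_prod_beta')
qed

lemma H3_trans:
  assumes "H3 M Hf" and "\<And>p. \<bar>a p\<bar> = \<bar>p\<bar>"
  shows "H3 M (\<lambda>p s \<omega>. Hf (a p) (c s) \<omega>)"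
  using assms unfolding H3_def by metis

lemma ergodic_neg:
  assumes E: "ergodic_group M \<tau>"
  shows "ergodic_group M (\<lambda>z. \<tau> (- z))"
  unfolding ergodic_group_def
proof (intro conjI)
  show "\<forall>\<omega>\<in>space M. \<tau> (- 0) \<omega> = \<omega>" using E by (simp add: ergodic_group_def)
  show "\<forall>z w. \<forall>\<omega>\<in>space M. \<tau> (- (z + w)) \<omega> = \<tau> (- z) (\<tau> (- w) \<omega>)"
    using E unfolding ergodic_group_def by (metis minus_add_distrib)
  show "\<forall>z. \<tau> (- z) \<in> M \<rightarrow>\<^sub>M M \<and> (\<forall>A\<in>sets M. measure M (\<tau> (- z) -` A \<inter> space M) = measure M A)"
    using E unfolding ergodic_group_def by blast
  show "\<forall>A\<in>sets M. (\<forall>z. \<tau> (- z) -` A \<inter> space M = A) \<longrightarrow> measure M A = 0 \<or> measure M A = 1"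
  proof (intro ballI impI)
    fix A assume A: "A \<in> sets M" and inv: "\<forall>z. \<tau> (- z) -` A \<inter> space M = A"
    then have "\<forall>z. \<tau> z -` A \<inter> space M = A" by (metis minus_minus)
    then show "measure M A = 0 \<or> measure M A = 1" using E A unfolding ergodic_group_def by blast
  qed
qed

lemma H8_srefl: "H8 M \<tau> Hf \<Longrightarrow> H8 M (\<lambda>z. \<tau> (- z)) (srefl Hf)"
  unfolding H8_def srefl_def by (metis minus_add_distrib)

lemma H8_hrefl: "H8 M \<tau> Hf \<Longrightarrow> H8 M (\<lambda>z. \<tau> (- z)) (hrefl Hf)"
  unfolding H8_def hrefl_def by (metis minus_add_distrib)

lemma H8_prefl: "H8 M \<tau> Hf \<Longrightarrow> H8 M \<tau> (prefl Hf)"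
  unfolding H8_def prefl_def by metis

lemma Hmeas_srefl: "H_meas M Hf \<Longrightarrow> H_meas M (srefl Hf)"
  unfolding srefl_def using Hmeas_trans[of M Hf "\<lambda>p. p" uminus]
  by (simp add: continuous_on_id continuous_on_minus)

lemma Hmeas_hrefl: "H_meas M Hf \<Longrightarrow> H_meas M (hrefl Hf)"
  unfolding hrefl_def using Hmeas_trans[of M Hf uminus uminus]
  by (simp add: continuous_on_id continuous_on_minus)

lemma Hmeas_prefl: "H_meas M Hf \<Longrightarrow> H_meas M (prefl Hf)"
  unfolding prefl_def using Hmeas_trans[of M Hf uminus "\<lambda>s. s"]
  by (simp add: continuous_on_id continuous_on_minus)

lemma H3_srefl: "H3 M Hf \<Longrightarrow> H3 M (srefl Hf)"
  unfolding srefl_def using H3_trans[of M Hf "\<lambda>p. p" uminus] by simp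

lemma H3_hrefl: "H3 M Hf \<Longrightarrow> H3 M (hrefl Hf)"
  unfolding hrefl_def using H3_trans[of M Hf uminus uminus] by simp

lemma H3_prefl: "H3 M Hf \<Longrightarrow> H3 M (prefl Hf)"
  unfolding prefl_def using H3_trans[of M Hf uminus "\<lambda>s. s"] by simp

lemma bfun_srefl: "bfun mu (srefl Hf) s \<omega> = bfun mu Hf (- s) \<omega>"
  by (simp add: bfun_def srefl_def)

lemma bfun_prefl: "bfun mu (prefl Hf) s \<omega> = bfun mu (hrefl Hf) (- s) \<omega>"
  by (simp add: bfun_def prefl_def hrefl_def)


lemma mod_cont:
  fixes G :: "real \<Rightarrow> real \<Rightarrow> real"
  assumes w: "modulus w" "\<forall>p x y. \<bar>G p y - G p x\<bar> \<le> w (\<bar>x - y\<bar> * (1 + \<bar>p\<bar>))"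
  shows "((\<lambda>s. G p s) \<longlongrightarrow> G p s0) (at s0)"
proof -
  have wc: "continuous_on {0..} w" and w0: "w 0 = 0" using w(1) by (auto simp: modulus_def)
  have "((\<lambda>s. \<bar>s0 - s\<bar> * (1 + \<bar>p\<bar>)) \<longlongrightarrow> \<bar>s0 - s0\<bar> * (1 + \<bar>p\<bar>)) (at s0)"
    by (intro tendsto_intros)
  then have "((\<lambda>s. w (\<bar>s0 - s\<bar> * (1 + \<bar>p\<bar>))) \<longlongrightarrow> w 0) (at s0)"
    by (intro continuous_on_tendsto_compose[OF wc]) auto
  then have t: "((\<lambda>s. w (\<bar>s0 - s\<bar> * (1 + \<bar>p\<bar>))) \<longlongrightarrow> 0) (at s0)" using w0 by simp
  have "((\<lambda>s. G p s - G p s0) \<longlongrightarrow> 0) (at s0)"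
    by (rule Lim_null_comparison[OF _ t]) (use w(2) in auto)
  then show ?thesis by (simp add: LIM_zero_iff)
qed

lemma Atilde_ge:
  assumes H: "H1to6 M Hf" and \<omega>: "\<omega> \<in> space M"
  shows "Hf 0 s \<omega> \<le> Atilde Hf \<omega>"
proof -
  obtain w where w: "modulus w" "\<forall>p x y. \<bar>Hf p y \<omega> - Hf p x \<omega>\<bar> \<le> w (\<bar>x - y\<bar> * (1 + \<bar>p\<bar>))"
    using H \<omega> unfolding H1to6_def H4_def by blast
  have m0: "\<forall>p s. Hf p s \<omega> \<ge> Hf 0 s \<omega>" using H \<omega> unfolding H1to6_def H6_def by blast
  obtain c0 C0 \<gamma> where h2: "\<forall>p y. \<forall>\<omega>\<in>space M. - c0 * \<bar>p + \<gamma>\<bar> \<le> Hf p y \<omega> \<and> Hf p y \<omega> \<le> C0 * \<bar>p + \<gamma>\<bar>"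
    using H unfolding H1to6_def H2_def by blast
  have "\<forall>s. Hf 0 s \<omega> \<le> C0 * \<bar>\<gamma>\<bar>"
  proof
    fix s
    from h2 \<omega> have "Hf 0 s \<omega> \<le> C0 * \<bar>0 + \<gamma>\<bar>" by blast
    then show "Hf 0 s \<omega> \<le> C0 * \<bar>\<gamma>\<bar>" by simp
  qed
  then have "(\<lambda>_. 0) \<in> subsols Hf (C0 * \<bar>\<gamma>\<bar>) \<omega>" using zero_sub[where G="\<lambda>p s. Hf p s \<omega>"] by (simp add: subsols_def)
  then have ne: "{lam. subsols Hf lam \<omega> \<noteq> {}} \<noteq> {}" by blast
  have lb: "Hf 0 s \<omega> \<le> lam" if lamS: "lam \<in> {lam. subsols Hf lam \<omega> \<noteq> {}}" for lam
  proof -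
    from lamS have "subsols Hf lam \<omega> \<noteq> {}" by simp
    then obtain v where v: "v \<in> subsols Hf lam \<omega>" by blast
    then have "glob_lip v" "visc_sub (\<lambda>p y. Hf p y \<omega>) v lam" by (auto simp: subsols_def)
    then show ?thesis by (rule sub_le_level[OF _ _ w m0])
  qed
  show ?thesis unfolding Atilde_def by (rule cInf_greatest[OF ne lb])
qed

lemma Atilde_le:
  assumes H: "H1to6 M Hf" and \<omega>: "\<omega> \<in> space M" and c: "\<forall>s. Hf 0 s \<omega> \<le> c"
  shows "Atilde Hf \<omega> \<le> c"
proof -
  have "(\<lambda>_. 0) \<in> subsols Hf c \<omega>" using zero_sub[where G="\<lambda>p s. Hf p s \<omega>", OF c] by (simp add: subsols_def)
  then have cin: "c \<in> {lam. subsols Hf lam \<omega> \<noteq> {}}" by blast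
  have "bdd_below {lam. subsols Hf lam \<omega> \<noteq> {}}"
  proof (rule bdd_belowI)
    fix lam assume "lam \<in> {lam. subsols Hf lam \<omega> \<noteq> {}}"
    then obtain v where "v \<in> subsols Hf lam \<omega>" by blast
    have "(\<lambda>_. 0) \<in> subsols Hf lam \<omega> \<longrightarrow> True" by simp
    obtain w where w: "modulus w" "\<forall>p x y. \<bar>Hf p y \<omega> - Hf p x \<omega>\<bar> \<le> w (\<bar>x - y\<bar> * (1 + \<bar>p\<bar>))"
      using H \<omega> unfolding H1to6_def H4_def by blast
    have m0: "\<forall>p s. Hf p s \<omega> \<ge> Hf 0 s \<omega>" using H \<omega> unfolding H1to6_def H6_def by blast
    have "glob_lip v" "visc_sub (\<lambda>p y. Hf p y \<omega>) v lam" using \<open>v \<in> subsols Hf lam \<omega>\<close> by (auto simp: subsols_def)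
    then show "Hf 0 0 \<omega> \<le> lam" by (rule sub_le_level[OF _ _ w m0])
  qed
  then show ?thesis unfolding Atilde_def by (rule cInf_lower[OF cin])
qed

lemma Atilde_le_iff:
  assumes H: "H1to6 M Hf" and \<omega>: "\<omega> \<in> space M"
  shows "Atilde Hf \<omega> \<le> c \<longleftrightarrow> (\<forall>s. Hf 0 s \<omega> \<le> c)"
proof
  assume a: "Atilde Hf \<omega> \<le> c"
  show "\<forall>s. Hf 0 s \<omega> \<le> c"
  proof
    fix s show "Hf 0 s \<omega> \<le> c" using order_trans[OF Atilde_ge[OF H \<omega>, of s] a] .
  qed
qed (rule Atilde_le[OF H \<omega>])

lemma Atilde_rat:
  assumes H: "H1to6 M Hf" and \<omega>: "\<omega> \<in> space M"
  shows "(\<forall>s. Hf 0 s \<omega> \<le> c) \<longleftrightarrow> (\<forall>q::rat. Hf 0 (of_rat q) \<omega> \<le> c)"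
proof (intro iffI allI)
  assume r: "\<forall>q::rat. Hf 0 (of_rat q) \<omega> \<le> c"
  fix s
  show "Hf 0 s \<omega> \<le> c"
  proof (rule ccontr)
    assume "\<not> Hf 0 s \<omega> \<le> c"
    then have gt: "c < Hf 0 s \<omega>" by simp
    obtain w where w: "modulus w" "\<forall>p x y. \<bar>Hf p y \<omega> - Hf p x \<omega>\<bar> \<le> w (\<bar>x - y\<bar> * (1 + \<bar>p\<bar>))"
      using H \<omega> unfolding H1to6_def H4_def by blast
    have "eventually (\<lambda>x. c < Hf 0 x \<omega>) (at s)"
      using order_tendstoD(1)[OF mod_cont[where G="\<lambda>p s. Hf p s \<omega>", OF w] gt] by simp
    then obtain d where d: "d > 0" "\<forall>x. x \<noteq> s \<and> dist x s < d \<longrightarrow> c < Hf 0 x \<omega>"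
      unfolding eventually_at by blast
    obtain q :: rat where q: "s < of_rat q" "of_rat q < s + d" using of_rat_dense[of s "s + d"] d by auto
    then have "c < Hf 0 (of_rat q) \<omega>" using d(2)[rule_format, of "of_rat q"] by (simp add: dist_real_def)
    then show False using r by (meson not_le)
  qed
qed blast

lemma Atilde_meas:
  assumes H: "H1to6 M Hf"
  shows "Atilde Hf \<in> borel_measurable M"
proof -
  have hm: "(\<lambda>(py, \<omega>). Hf (fst py) (snd py) \<omega>) \<in> borel_measurable ((borel :: (real \<times> real) measure) \<Otimes>\<^sub>M M)"
    using H by (simp add: H1to6_def H_meas_def)
  have hq[measurable]: "(\<lambda>\<omega>. Hf 0 (of_rat q) \<omega>) \<in> borel_measurable M" for q :: rat
    using measurable_Pair2[OF hm, of "(0, of_rat q)"] by simp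
  show ?thesis
    unfolding borel_measurable_iff_le
  proof
    fix c
    have "{w \<in> space M. Atilde Hf w \<le> c} = {w \<in> space M. \<forall>q::rat. Hf 0 (of_rat q) w \<le> c}"
      by (auto simp: Atilde_le_iff[OF H] Atilde_rat[OF H])
    also have "\<dots> \<in> sets M" by measurable
    finally show "{w \<in> space M. Atilde Hf w \<le> c} \<in> sets M" .
  qed
qed

lemma Atilde_inv:
  assumes H: "H1to6 M Hf" and E: "ergodic_group M \<tau>" and h8: "H8 M \<tau> Hf" and \<omega>: "\<omega> \<in> space M"
  shows "Atilde Hf (\<tau> z \<omega>) = Atilde Hf \<omega>"
proof -
  have tz: "\<tau> z \<omega> \<in> space M" using tau_space[OF E \<omega>] .
  have sh: "\<And>s. Hf 0 s (\<tau> z \<omega>) = Hf 0 (s + z) \<omega>" using h8 \<omega> unfolding H8_def by simp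
  have eq: "(\<forall>s. Hf 0 s (\<tau> z \<omega>) \<le> c) \<longleftrightarrow> (\<forall>s. Hf 0 s \<omega> \<le> c)" for c
  proof (intro iffI allI)
    fix s assume "\<forall>s. Hf 0 s (\<tau> z \<omega>) \<le> c"
    then have "Hf 0 (s - z) (\<tau> z \<omega>) \<le> c" by blast
    then show "Hf 0 s \<omega> \<le> c" using sh[of "s - z"] by simp
  next
    fix s assume "\<forall>s. Hf 0 s \<omega> \<le> c"
    then show "Hf 0 s (\<tau> z \<omega>) \<le> c" using sh[of s] by simp
  qed
  have "Atilde Hf (\<tau> z \<omega>) \<le> Atilde Hf \<omega>"
    using eq[of "Atilde Hf \<omega>"] Atilde_le_iff[OF H tz, of "Atilde Hf \<omega>"] Atilde_le_iff[OF H \<omega>, of "Atilde Hf \<omega>"]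
    by simp
  moreover have "Atilde Hf \<omega> \<le> Atilde Hf (\<tau> z \<omega>)"
    using eq[of "Atilde Hf (\<tau> z \<omega>)"] Atilde_le_iff[OF H tz, of "Atilde Hf (\<tau> z \<omega>)"] Atilde_le_iff[OF H \<omega>, of "Atilde Hf (\<tau> z \<omega>)"]
    by simp
  ultimately show ?thesis by simp
qed

lemma Atilde_bound:
  assumes H: "H1to6 M Hf"
  shows "\<exists>C. \<forall>\<omega>\<in>space M. \<bar>Atilde Hf \<omega>\<bar> \<le> C"
proof -
  obtain c0 C0 \<gamma> where h2: "\<forall>p y. \<forall>\<omega>\<in>space M. - c0 * \<bar>p + \<gamma>\<bar> \<le> Hf p y \<omega> \<and> Hf p y \<omega> \<le> C0 * \<bar>p + \<gamma>\<bar>"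
    using H unfolding H1to6_def H2_def by blast
  have "\<bar>Atilde Hf \<omega>\<bar> \<le> \<bar>c0 * \<bar>\<gamma>\<bar>\<bar> + \<bar>C0 * \<bar>\<gamma>\<bar>\<bar>" if \<omega>: "\<omega> \<in> space M" for \<omega>
  proof -
    have hb: "- c0 * \<bar>\<gamma>\<bar> \<le> Hf 0 s \<omega> \<and> Hf 0 s \<omega> \<le> C0 * \<bar>\<gamma>\<bar>" for s
    proof -
      from h2 \<omega> have "- c0 * \<bar>0 + \<gamma>\<bar> \<le> Hf 0 s \<omega> \<and> Hf 0 s \<omega> \<le> C0 * \<bar>0 + \<gamma>\<bar>" by blast
      then show ?thesis by simp
    qed
    have "Atilde Hf \<omega> \<le> C0 * \<bar>\<gamma>\<bar>" using hb by (intro Atilde_le[OF H \<omega>]) blast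
    moreover have "- c0 * \<bar>\<gamma>\<bar> \<le> Atilde Hf \<omega>" using hb[of 0] Atilde_ge[OF H \<omega>, of 0] by linarith
    ultimately show ?thesis by linarith
  qed
  then show ?thesis by blast
qed

lemma mu_star_ae:
  assumes P: "prob_space M" and E: "ergodic_group M \<tau>" and H: "H1to6 M Hf" and h8: "H8 M \<tau> Hf"
  shows "AE \<omega> in M. Atilde Hf \<omega> = mu_star M Hf"
proof -
  interpret prob_space M by (rule P)
  obtain C where C0: "\<forall>\<omega>\<in>space M. \<bar>Atilde Hf \<omega>\<bar> \<le> C" using Atilde_bound[OF H] by blast
  have C: "\<And>\<omega>. \<omega> \<in> space M \<Longrightarrow> \<bar>Atilde Hf \<omega>\<bar> \<le> C" using C0 by blast
  have ae: "AE \<omega> in M. Atilde Hf \<omega> = (\<integral>\<omega>. Atilde Hf \<omega> \<partial>M)"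
    using prob_space.ergodic_const[of M \<tau> "Atilde Hf" C, OF P E Atilde_meas[OF H] C Atilde_inv[OF H E h8]] .
  have "mu_star M Hf = (\<integral>\<omega>. Atilde Hf \<omega> \<partial>M)"
    unfolding mu_star_def
  proof (rule the_equality)
    show "AE \<omega> in M. Atilde Hf \<omega> = (\<integral>\<omega>. Atilde Hf \<omega> \<partial>M)" by (rule ae)
    fix c assume "AE \<omega> in M. Atilde Hf \<omega> = c"
    with ae have "AE \<omega> in M. c = (\<integral>\<omega>. Atilde Hf \<omega> \<partial>M)" by eventually_elim simp
    then show "c = (\<integral>\<omega>. Atilde Hf \<omega> \<partial>M)" by simp
  qed
  then show ?thesis using ae by simp
qed


definition mbarf :: "real \<Rightarrow> real \<Rightarrow> real \<Rightarrow> real \<Rightarrow> real \<Rightarrow> real \<Rightarrow> real" where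
  "mbarf \<alpha>1 \<beta>1 \<alpha>2 \<beta>2 y x = (if x \<le> y then Jl \<alpha>1 \<beta>1 y - Jl \<alpha>1 \<beta>1 x else Jl \<alpha>2 \<beta>2 (- y) - Jl \<alpha>2 \<beta>2 (- x))"

lemma mbarf_nonneg:
  assumes "0 \<le> \<alpha>1" "0 \<le> \<beta>1" "0 \<le> \<alpha>2" "0 \<le> \<beta>2"
  shows "0 \<le> mbarf \<alpha>1 \<beta>1 \<alpha>2 \<beta>2 y x"
  using Jl_mono[OF assms(1,2), of x y] Jl_mono[OF assms(3,4), of "- x" "- y"]
  by (auto simp: mbarf_def)

lemma conv_main:
  assumes H6: "H1to6 M Hf" and \<omega>: "\<omega> \<in> space M" and sub: "\<forall>s. Hf 0 s \<omega> < mu"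
    and K: "K \<ge> 0" and hR: "\<And>s p. s \<ge> K \<Longrightarrow> Hf p s \<omega> = HR p s \<omega>"
    and hL: "\<And>s p. s \<le> - K \<Longrightarrow> Hf p s \<omega> = HL p s \<omega>"
    and int1: "\<And>a c. (\<lambda>s. bfun mu HR s \<omega>) integrable_on {a..c}"
    and int2: "\<And>a c. (\<lambda>s. bfun mu (srefl HL) s \<omega>) integrable_on {a..c}"
    and int3: "\<And>a c. (\<lambda>s. bfun mu (hrefl HL) s \<omega>) integrable_on {a..c}"
    and int4: "\<And>a c. (\<lambda>s. bfun mu (prefl HR) s \<omega>) integrable_on {a..c}"
    and l1: "((\<lambda>t. integral {0..t} (\<lambda>s. bfun mu HR s \<omega>) / t) \<longlongrightarrow> \<alpha>1) at_top"
    and l2: "((\<lambda>t. integral {0..t} (\<lambda>s. bfun mu (srefl HL) s \<omega>) / t) \<longlongrightarrow> \<beta>1) at_top"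
    and l3: "((\<lambda>t. integral {0..t} (\<lambda>s. bfun mu (hrefl HL) s \<omega>) / t) \<longlongrightarrow> \<alpha>2) at_top"
    and l4: "((\<lambda>t. integral {0..t} (\<lambda>s. bfun mu (prefl HR) s \<omega>) / t) \<longlongrightarrow> \<beta>2) at_top"
  shows "((\<lambda>t. metric_fn mu Hf (t * y) (t * x) \<omega> / t) \<longlongrightarrow> mbarf \<alpha>1 \<beta>1 \<alpha>2 \<beta>2 y x) at_top"
proof (cases "x \<le> y")
  case True
  have co: "core (\<lambda>p s. Hf p s \<omega>) mu" by (rule core_of_H[OF H6 \<omega> sub])
  have int2': "\<And>a c. (\<lambda>s. bfun mu HL (- s) \<omega>) integrable_on {a..c}" using int2 by (simp add: bfun_srefl)
  have l2': "((\<lambda>t. integral {0..t} (\<lambda>s. bfun mu HL (- s) \<omega>) / t) \<longlongrightarrow> \<beta>1) at_top" using l2 by (simp add: bfun_srefl)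
  show ?thesis using metric_limit[where Hf=Hf and \<omega>=\<omega> and mu=mu and HA=HR and HB=HL, OF co K hR hL int1 int2' l1 l2' True] True by (simp add: mbarf_def)
next
  case False
  have co: "core (\<lambda>p s. Hf p s \<omega>) mu" by (rule core_of_H[OF H6 \<omega> sub])
  have co': "core (\<lambda>p s. hrefl Hf p s \<omega>) mu" using core_refl[OF co] by (simp add: hrefl_def)
  have hR': "hrefl Hf p s \<omega> = hrefl HL p s \<omega>" if "s \<ge> K" for s p
    using hL[of "- s" "- p"] that by (simp add: hrefl_def)
  have hL': "hrefl Hf p s \<omega> = hrefl HR p s \<omega>" if "s \<le> - K" for s p
    using hR[of "- s" "- p"] that by (simp add: hrefl_def)
  have int4': "\<And>a c. (\<lambda>s. bfun mu (hrefl HR) (- s) \<omega>) integrable_on {a..c}" using int4 by (simp add: bfun_prefl)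
  have l4': "((\<lambda>t. integral {0..t} (\<lambda>s. bfun mu (hrefl HR) (- s) \<omega>) / t) \<longlongrightarrow> \<beta>2) at_top" using l4 by (simp add: bfun_prefl)
  have xy: "- x \<le> - y" using False by simp
  have lim: "((\<lambda>t. metric_fn mu (hrefl Hf) (t * (- y)) (t * (- x)) \<omega> / t) \<longlongrightarrow> Jl \<alpha>2 \<beta>2 (- y) - Jl \<alpha>2 \<beta>2 (- x)) at_top"
    by (rule metric_limit[where Hf="hrefl Hf" and \<omega>=\<omega> and mu=mu and HA="hrefl HL" and HB="hrefl HR", OF co' K hR' hL' int3 int4' l3 l4' xy])
  have "metric_fn mu Hf (t * y) (t * x) \<omega> = metric_fn mu (hrefl Hf) (t * (- y)) (t * (- x)) \<omega>" for t
    using metric_hrefl[of mu Hf "t * y" "t * x" \<omega>] by simp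
  then show ?thesis using lim False by (simp add: mbarf_def)
qed


lemma ergs:
  assumes P: "prob_space M" and E: "ergodic_group M \<tau>"
    and HL6: "H1to6 M HL" and HR6: "H1to6 M HR" and h8L: "H8 M \<tau> HL" and h8R: "H8 M \<tau> HR"
  shows "\<exists>\<alpha>1 \<beta>1 \<alpha>2 \<beta>2 N. 0 \<le> \<alpha>1 \<and> 0 \<le> \<beta>1 \<and> 0 \<le> \<alpha>2 \<and> 0 \<le> \<beta>2 \<and> N \<in> null_sets M \<and>
    (\<forall>\<omega>\<in>space M. \<forall>a c. (\<lambda>s. bfun mu HR s \<omega>) integrable_on {a..c} \<and> (\<lambda>s. bfun mu (srefl HL) s \<omega>) integrable_on {a..c}
       \<and> (\<lambda>s. bfun mu (hrefl HL) s \<omega>) integrable_on {a..c} \<and> (\<lambda>s. bfun mu (prefl HR) s \<omega>) integrable_on {a..c}) \<and>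
    (\<forall>\<omega>\<in>space M - N.
       ((\<lambda>t. integral {0..t} (\<lambda>s. bfun mu HR s \<omega>) / t) \<longlongrightarrow> \<alpha>1) at_top \<and>
       ((\<lambda>t. integral {0..t} (\<lambda>s. bfun mu (srefl HL) s \<omega>) / t) \<longlongrightarrow> \<beta>1) at_top \<and>
       ((\<lambda>t. integral {0..t} (\<lambda>s. bfun mu (hrefl HL) s \<omega>) / t) \<longlongrightarrow> \<alpha>2) at_top \<and>
       ((\<lambda>t. integral {0..t} (\<lambda>s. bfun mu (prefl HR) s \<omega>) / t) \<longlongrightarrow> \<beta>2) at_top)"
proof -
  have E': "ergodic_group M (\<lambda>z. \<tau> (- z))" by (rule ergodic_neg[OF E])
  have hmL: "H_meas M HL" and h3L: "H3 M HL" using HL6 by (auto simp: H1to6_def)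
  have hmR: "H_meas M HR" and h3R: "H3 M HR" using HR6 by (auto simp: H1to6_def)
  note e1 = ergodic_bfun[where mu=mu, OF P E hmR h3R h8R]
  note e2 = ergodic_bfun[where mu=mu, OF P E' Hmeas_srefl[OF hmL] H3_srefl[OF h3L] H8_srefl[OF h8L]]
  note e3 = ergodic_bfun[where mu=mu, OF P E' Hmeas_hrefl[OF hmL] H3_hrefl[OF h3L] H8_hrefl[OF h8L]]
  note e4 = ergodic_bfun[where mu=mu, OF P E Hmeas_prefl[OF hmR] H3_prefl[OF h3R] H8_prefl[OF h8R]]
  obtain \<alpha>1 where a1: "0 \<le> \<alpha>1" "AE \<omega> in M. ((\<lambda>t. integral {0..t} (\<lambda>s. bfun mu HR s \<omega>) / t) \<longlongrightarrow> \<alpha>1) at_top"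
    using e1(1) by blast
  obtain \<beta>1 where b1: "0 \<le> \<beta>1" "AE \<omega> in M. ((\<lambda>t. integral {0..t} (\<lambda>s. bfun mu (srefl HL) s \<omega>) / t) \<longlongrightarrow> \<beta>1) at_top"
    using e2(1) by blast
  obtain \<alpha>2 where a2: "0 \<le> \<alpha>2" "AE \<omega> in M. ((\<lambda>t. integral {0..t} (\<lambda>s. bfun mu (hrefl HL) s \<omega>) / t) \<longlongrightarrow> \<alpha>2) at_top"
    using e3(1) by blast
  obtain \<beta>2 where b2: "0 \<le> \<beta>2" "AE \<omega> in M. ((\<lambda>t. integral {0..t} (\<lambda>s. bfun mu (prefl HR) s \<omega>) / t) \<longlongrightarrow> \<beta>2) at_top"
    using e4(1) by blast
  have "AE \<omega> in M. ((\<lambda>t. integral {0..t} (\<lambda>s. bfun mu HR s \<omega>) / t) \<longlongrightarrow> \<alpha>1) at_top \<and>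
       ((\<lambda>t. integral {0..t} (\<lambda>s. bfun mu (srefl HL) s \<omega>) / t) \<longlongrightarrow> \<beta>1) at_top \<and>
       ((\<lambda>t. integral {0..t} (\<lambda>s. bfun mu (hrefl HL) s \<omega>) / t) \<longlongrightarrow> \<alpha>2) at_top \<and>
       ((\<lambda>t. integral {0..t} (\<lambda>s. bfun mu (prefl HR) s \<omega>) / t) \<longlongrightarrow> \<beta>2) at_top"
    using a1(2) b1(2) a2(2) b2(2) by eventually_elim (intro conjI)
  then obtain N where N: "{\<omega> \<in> space M. \<not> (((\<lambda>t. integral {0..t} (\<lambda>s. bfun mu HR s \<omega>) / t) \<longlongrightarrow> \<alpha>1) at_top \<and>
       ((\<lambda>t. integral {0..t} (\<lambda>s. bfun mu (srefl HL) s \<omega>) / t) \<longlongrightarrow> \<beta>1) at_top \<and>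
       ((\<lambda>t. integral {0..t} (\<lambda>s. bfun mu (hrefl HL) s \<omega>) / t) \<longlongrightarrow> \<alpha>2) at_top \<and>
       ((\<lambda>t. integral {0..t} (\<lambda>s. bfun mu (prefl HR) s \<omega>) / t) \<longlongrightarrow> \<beta>2) at_top)} \<subseteq> N"
    "emeasure M N = 0" "N \<in> sets M"
    by (rule AE_E)
  have Nn: "N \<in> null_sets M" using N by (simp add: null_sets_def)
  show ?thesis
    apply (rule exI[of _ \<alpha>1], rule exI[of _ \<beta>1], rule exI[of _ \<alpha>2], rule exI[of _ \<beta>2], rule exI[of _ N])
    using a1(1) b1(1) a2(1) b2(1) Nn e1(2) e2(2) e3(2) e4(2) N(1) by blast
qed

lemma phi_range:
  fixes \<phi> :: "real \<Rightarrow> real"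
  assumes "antimono \<phi>" "\<forall>y\<le>-1. \<phi> y = 1" "\<forall>y\<ge>1. \<phi> y = (0::real)"
  shows "0 \<le> \<phi> s \<and> \<phi> s \<le> 1"
proof
  have "\<phi> (max s 1) \<le> \<phi> s" by (rule antimonoD[OF assms(1)]) simp
  then show "0 \<le> \<phi> s" using assms(3) by simp
  have "\<phi> s \<le> \<phi> (min s (-1))" by (rule antimonoD[OF assms(1)]) simp
  then show "\<phi> s \<le> 1" using assms(2) by simp
qed

lemma convex_comb_less:
  fixes a b l m :: real
  assumes "0 \<le> l" "l \<le> 1" "a \<le> m" "b \<le> m" "m < mu"
  shows "l * a + (1 - l) * b < mu"
proof -
  have "l * a \<le> l * m" using assms by (intro mult_left_mono) auto
  moreover have "(1 - l) * b \<le> (1 - l) * m" using assms by (intro mult_left_mono) auto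
  ultimately have "l * a + (1 - l) * b \<le> m" by (simp add: algebra_simps)
  then show ?thesis using assms by simp
qed

theorem theorem5p1:
  fixes M :: "'a measure" and \<tau> :: "real \<Rightarrow> 'a \<Rightarrow> 'a"
    and HL HR H0 H :: "real \<Rightarrow> real \<Rightarrow> 'a \<Rightarrow> real"
    and Heps :: "real \<Rightarrow> real \<Rightarrow> real \<Rightarrow> 'a \<Rightarrow> real"
    and \<psi> :: "real \<Rightarrow> real \<Rightarrow> real" and \<phi> :: "real \<Rightarrow> real"
    and \<Omega>1 :: "real \<Rightarrow> 'a set" and \<mu> :: real
  assumes "prob_space M" and "ergodic_group M \<tau>"
  shows
   \<comment> \<open>case (H7-eps)\<close>
   "((\<forall>\<epsilon>>0. H7_eps M \<epsilon> (\<psi> \<epsilon>) HL HR H0 (Heps \<epsilon>) \<and> H1to6 M (Heps \<epsilon>) \<and> H9 M (Heps \<epsilon>)) \<and>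
     H1to6 M HL \<and> H1to6 M HR \<and> H1to6 M H0 \<and> H8 M \<tau> HL \<and> H8 M \<tau> HR \<and> H8 M \<tau> H0 \<and>
     (\<forall>\<epsilon>>0. \<Omega>1 \<epsilon> \<in> sets M) \<and>
     (\<forall>\<epsilon> \<epsilon>'. 0 < \<epsilon> \<and> \<epsilon> \<le> \<epsilon>' \<longrightarrow> \<Omega>1 \<epsilon>' \<subseteq> \<Omega>1 \<epsilon>) \<and>
     ((\<lambda>\<epsilon>. measure M (\<Omega>1 \<epsilon>)) \<longlongrightarrow> 1) (at_right 0) \<and>
     (\<forall>\<epsilon>>0. \<forall>\<omega>\<in>\<Omega>1 \<epsilon>. Atilde (Heps \<epsilon>) \<omega> = mu_star M H0) \<and>
     \<mu> > mu_star M H0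
     \<longrightarrow>
     (\<exists>\<Omega>0 :: real \<Rightarrow> 'a set. \<exists>\<theta> :: real \<Rightarrow> real. \<exists>mbar :: real \<Rightarrow> real \<Rightarrow> real.
        (\<forall>\<epsilon>>0. \<Omega>0 \<epsilon> \<in> sets M \<and> \<Omega>0 \<epsilon> \<subseteq> \<Omega>1 \<epsilon> \<and> measure M (\<Omega>0 \<epsilon>) = 1 - \<theta> \<epsilon>) \<and>
        (\<forall>\<epsilon> \<epsilon>'. 0 < \<epsilon> \<and> \<epsilon> \<le> \<epsilon>' \<longrightarrow> \<Omega>0 \<epsilon>' \<subseteq> \<Omega>0 \<epsilon>) \<and>
        (\<theta> \<longlongrightarrow> 0) (at_right 0) \<and>
        (\<forall>y x. mbar y x \<ge> 0) \<and>
        (\<forall>\<epsilon>>0. \<forall>\<omega>\<in>\<Omega>0 \<epsilon>. \<forall>x y.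
           ((\<lambda>t. metric_fn \<mu> (Heps \<epsilon>) (t * y) (t * x) \<omega> / t) \<longlongrightarrow> mbar y x) at_top)))
    \<and>
   \<comment> \<open>case (H7-WFL)\<close>
    (H7_WFL M \<phi> HL HR H \<and> H1to6 M H \<and> H9 M H \<and>
     H1to6 M HL \<and> H1to6 M HR \<and> H8 M \<tau> HL \<and> H8 M \<tau> HR \<and>
     \<mu> > max (mu_star M HL) (mu_star M HR)
     \<longrightarrow>
     (\<exists>\<Omega>0 :: 'a set. \<exists>mbar :: real \<Rightarrow> real \<Rightarrow> real.
        \<Omega>0 \<in> sets M \<and> measure M \<Omega>0 = 1 \<and>
        (\<forall>y x. mbar y x \<ge> 0) \<and>
        (\<forall>\<omega>\<in>\<Omega>0. \<forall>x y.
           ((\<lambda>t. metric_fn \<mu> H (t * y) (t * x) \<omega> / t) \<longlongrightarrow> mbar y x) at_top)))"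

proof (intro conjI impI)
  have P: "prob_space M" by (rule assms(1))
  have E: "ergodic_group M \<tau>" by (rule assms(2))
  interpret prob_space M by (rule P)
  {
    assume hyp: "(\<forall>\<epsilon>>0. H7_eps M \<epsilon> (\<psi> \<epsilon>) HL HR H0 (Heps \<epsilon>) \<and> H1to6 M (Heps \<epsilon>) \<and> H9 M (Heps \<epsilon>)) \<and>
     H1to6 M HL \<and> H1to6 M HR \<and> H1to6 M H0 \<and> H8 M \<tau> HL \<and> H8 M \<tau> HR \<and> H8 M \<tau> H0 \<and>
     (\<forall>\<epsilon>>0. \<Omega>1 \<epsilon> \<in> sets M) \<and>
     (\<forall>\<epsilon> \<epsilon>'. 0 < \<epsilon> \<and> \<epsilon> \<le> \<epsilon>' \<longrightarrow> \<Omega>1 \<epsilon>' \<subseteq> \<Omega>1 \<epsilon>) \<and>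
     ((\<lambda>\<epsilon>. measure M (\<Omega>1 \<epsilon>)) \<longlongrightarrow> 1) (at_right 0) \<and>
     (\<forall>\<epsilon>>0. \<forall>\<omega>\<in>\<Omega>1 \<epsilon>. Atilde (Heps \<epsilon>) \<omega> = mu_star M H0) \<and>
     \<mu> > mu_star M H0"
    then have h7: "\<And>\<epsilon>. \<epsilon> > 0 \<Longrightarrow> H7_eps M \<epsilon> (\<psi> \<epsilon>) HL HR H0 (Heps \<epsilon>)"
      and h6e: "\<And>\<epsilon>. \<epsilon> > 0 \<Longrightarrow> H1to6 M (Heps \<epsilon>)"
      and HL6: "H1to6 M HL" and HR6: "H1to6 M HR" and h8L: "H8 M \<tau> HL" and h8R: "H8 M \<tau> HR"
      and O1m: "\<And>\<epsilon>. \<epsilon> > 0 \<Longrightarrow> \<Omega>1 \<epsilon> \<in> sets M"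
      and O1mono: "\<And>\<epsilon> \<epsilon>'. 0 < \<epsilon> \<Longrightarrow> \<epsilon> \<le> \<epsilon>' \<Longrightarrow> \<Omega>1 \<epsilon>' \<subseteq> \<Omega>1 \<epsilon>"
      and O1lim: "((\<lambda>\<epsilon>. measure M (\<Omega>1 \<epsilon>)) \<longlongrightarrow> 1) (at_right 0)"
      and O1A: "\<And>\<epsilon> \<omega>. \<epsilon> > 0 \<Longrightarrow> \<omega> \<in> \<Omega>1 \<epsilon> \<Longrightarrow> Atilde (Heps \<epsilon>) \<omega> = mu_star M H0"
      and mu: "mu_star M H0 < \<mu>"
      by auto
    obtain \<alpha>1 \<beta>1 \<alpha>2 \<beta>2 N where pos: "0 \<le> \<alpha>1" "0 \<le> \<beta>1" "0 \<le> \<alpha>2" "0 \<le> \<beta>2" and Nn: "N \<in> null_sets M"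
      and ints: "\<forall>\<omega>\<in>space M. \<forall>a c. (\<lambda>s. bfun \<mu> HR s \<omega>) integrable_on {a..c} \<and> (\<lambda>s. bfun \<mu> (srefl HL) s \<omega>) integrable_on {a..c}
       \<and> (\<lambda>s. bfun \<mu> (hrefl HL) s \<omega>) integrable_on {a..c} \<and> (\<lambda>s. bfun \<mu> (prefl HR) s \<omega>) integrable_on {a..c}"
      and lims: "\<forall>\<omega>\<in>space M - N.
       ((\<lambda>t. integral {0..t} (\<lambda>s. bfun \<mu> HR s \<omega>) / t) \<longlongrightarrow> \<alpha>1) at_top \<and>
       ((\<lambda>t. integral {0..t} (\<lambda>s. bfun \<mu> (srefl HL) s \<omega>) / t) \<longlongrightarrow> \<beta>1) at_top \<and>
       ((\<lambda>t. integral {0..t} (\<lambda>s. bfun \<mu> (hrefl HL) s \<omega>) / t) \<longlongrightarrow> \<alpha>2) at_top \<and>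
       ((\<lambda>t. integral {0..t} (\<lambda>s. bfun \<mu> (prefl HR) s \<omega>) / t) \<longlongrightarrow> \<beta>2) at_top"
      using ergs[OF P E HL6 HR6 h8L h8R, where mu=\<mu>] by blast
    define \<Omega>0 where "\<Omega>0 \<epsilon> = \<Omega>1 \<epsilon> - N" for \<epsilon>
    define \<theta> where "\<theta> \<epsilon> = 1 - measure M (\<Omega>0 \<epsilon>)" for \<epsilon>
    have Nm: "N \<in> sets M" using Nn by auto
    have th_eq: "\<theta> \<epsilon> = 1 - measure M (\<Omega>1 \<epsilon>)" if "\<epsilon> > 0" for \<epsilon>
      using measure_Diff_null_set[OF O1m[OF that] Nn] by (simp add: \<theta>_def \<Omega>0_def)
    have th_lim: "(\<theta> \<longlongrightarrow> 0) (at_right 0)"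
    proof -
      have "((\<lambda>\<epsilon>. 1 - measure M (\<Omega>1 \<epsilon>)) \<longlongrightarrow> 1 - 1) (at_right 0)" by (intro tendsto_intros O1lim)
      then have l: "((\<lambda>\<epsilon>. 1 - measure M (\<Omega>1 \<epsilon>)) \<longlongrightarrow> 0) (at_right 0)" by simp
      have "eventually (\<lambda>\<epsilon>. 1 - measure M (\<Omega>1 \<epsilon>) = \<theta> \<epsilon>) (at_right 0)"
        using eventually_at_right_less[of "0::real"] by eventually_elim (simp add: th_eq)
      then show ?thesis by (rule Lim_transform_eventually[OF l])
    qed
    have conv: "((\<lambda>t. metric_fn \<mu> (Heps \<epsilon>) (t * y) (t * x) \<omega> / t) \<longlongrightarrow> mbarf \<alpha>1 \<beta>1 \<alpha>2 \<beta>2 y x) at_top"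
      if e: "\<epsilon> > 0" and w: "\<omega> \<in> \<Omega>0 \<epsilon>" for \<epsilon> \<omega> x y
    proof -
      have \<omega>: "\<omega> \<in> space M" using w sets.sets_into_space[OF O1m[OF e]] by (auto simp: \<Omega>0_def)
      have \<omega>N: "\<omega> \<in> space M - N" using w \<omega> by (auto simp: \<Omega>0_def)
      have \<omega>1: "\<omega> \<in> \<Omega>1 \<epsilon>" using w by (auto simp: \<Omega>0_def)
      have sub: "\<forall>s. Heps \<epsilon> 0 s \<omega> < \<mu>"
        using Atilde_ge[OF h6e[OF e] \<omega>] O1A[OF e \<omega>1] mu by (metis le_less_trans)
      define K where "K = 2 / sqrt \<epsilon> + 1"
      have sq: "sqrt \<epsilon> > 0" using e by simp
      have K0: "K \<ge> 0" using sq by (simp add: K_def)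
      have H7: "smooth (\<psi> \<epsilon>)" "\<forall>y. y > 2 / sqrt \<epsilon> \<longrightarrow> \<psi> \<epsilon> y = 1" "\<forall>y. y < 1 / sqrt \<epsilon> \<longrightarrow> \<psi> \<epsilon> y = 0"
        "\<forall>p y. \<forall>\<omega>\<in>space M. Heps \<epsilon> p y \<omega> = \<psi> \<epsilon> (- y) * HL p y \<omega> + H0 p y \<omega> * (1 - \<psi> \<epsilon> (- y)) * (1 - \<psi> \<epsilon> y) + \<psi> \<epsilon> y * HR p y \<omega>"
        using h7[OF e] unfolding H7_eps_def by blast+
      have hR: "Heps \<epsilon> p s \<omega> = HR p s \<omega>" if "s \<ge> K" for s p
      proof -
        have s1: "s > 2 / sqrt \<epsilon>" using that by (simp add: K_def)
        have q: "0 < 1 / sqrt \<epsilon>" using sq by simp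
        have "0 < 2 / sqrt \<epsilon>" using sq by simp
        then have "s > 0" using s1 by linarith
        then have s2: "- s < 1 / sqrt \<epsilon>" using q by linarith
        show ?thesis using H7(4) \<omega> H7(2) s1 H7(3) s2 by simp
      qed
      have hL: "Heps \<epsilon> p s \<omega> = HL p s \<omega>" if "s \<le> - K" for s p
      proof -
        have s1: "- s > 2 / sqrt \<epsilon>" using that by (simp add: K_def)
        have q: "0 < 1 / sqrt \<epsilon>" using sq by simp
        have "0 < 2 / sqrt \<epsilon>" using sq by simp
        then have "- s > 0" using s1 by linarith
        then have s2: "s < 1 / sqrt \<epsilon>" using q by linarith
        show ?thesis using H7(4) \<omega> H7(2) s1 H7(3) s2 by simp
      qed
      show ?thesis
        using conv_main[where Hf="Heps \<epsilon>" and HR=HR and HL=HL and \<omega>=\<omega> and mu=\<mu>, OF h6e[OF e] \<omega> sub K0 hR hL] ints \<omega> lims \<omega>N by blast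
    qed
    show "\<exists>\<Omega>0 :: real \<Rightarrow> 'a set. \<exists>\<theta> :: real \<Rightarrow> real. \<exists>mbar :: real \<Rightarrow> real \<Rightarrow> real.
        (\<forall>\<epsilon>>0. \<Omega>0 \<epsilon> \<in> sets M \<and> \<Omega>0 \<epsilon> \<subseteq> \<Omega>1 \<epsilon> \<and> measure M (\<Omega>0 \<epsilon>) = 1 - \<theta> \<epsilon>) \<and>
        (\<forall>\<epsilon> \<epsilon>'. 0 < \<epsilon> \<and> \<epsilon> \<le> \<epsilon>' \<longrightarrow> \<Omega>0 \<epsilon>' \<subseteq> \<Omega>0 \<epsilon>) \<and>
        (\<theta> \<longlongrightarrow> 0) (at_right 0) \<and>
        (\<forall>y x. mbar y x \<ge> 0) \<and>
        (\<forall>\<epsilon>>0. \<forall>\<omega>\<in>\<Omega>0 \<epsilon>. \<forall>x y.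
           ((\<lambda>t. metric_fn \<mu> (Heps \<epsilon>) (t * y) (t * x) \<omega> / t) \<longlongrightarrow> mbar y x) at_top)"
    proof (intro exI[of _ \<Omega>0] exI[of _ \<theta>] exI[of _ "mbarf \<alpha>1 \<beta>1 \<alpha>2 \<beta>2"] conjI allI impI ballI)
      fix \<epsilon> :: real assume e: "\<epsilon> > 0"
      show "\<Omega>0 \<epsilon> \<in> sets M" using O1m[OF e] Nm by (simp add: \<Omega>0_def)
      show "\<Omega>0 \<epsilon> \<subseteq> \<Omega>1 \<epsilon>" by (auto simp: \<Omega>0_def)
      show "measure M (\<Omega>0 \<epsilon>) = 1 - \<theta> \<epsilon>" by (simp add: \<theta>_def)
    next
      fix \<epsilon> \<epsilon>' :: real assume "0 < \<epsilon> \<and> \<epsilon> \<le> \<epsilon>'"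
      then show "\<Omega>0 \<epsilon>' \<subseteq> \<Omega>0 \<epsilon>" using O1mono by (auto simp: \<Omega>0_def)
    next
      show "(\<theta> \<longlongrightarrow> 0) (at_right 0)" by (rule th_lim)
    next
      fix y x show "0 \<le> mbarf \<alpha>1 \<beta>1 \<alpha>2 \<beta>2 y x" by (rule mbarf_nonneg[OF pos])
    next
      fix \<epsilon> :: real and \<omega> x y assume "\<epsilon> > 0" "\<omega> \<in> \<Omega>0 \<epsilon>"
      then show "((\<lambda>t. metric_fn \<mu> (Heps \<epsilon>) (t * y) (t * x) \<omega> / t) \<longlongrightarrow> mbarf \<alpha>1 \<beta>1 \<alpha>2 \<beta>2 y x) at_top"
        by (rule conv)
    qed
  }
  {
    assume hyp: "H7_WFL M \<phi> HL HR H \<and> H1to6 M H \<and> H9 M H \<and>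
     H1to6 M HL \<and> H1to6 M HR \<and> H8 M \<tau> HL \<and> H8 M \<tau> HR \<and>
     \<mu> > max (mu_star M HL) (mu_star M HR)"
    then have h7: "H7_WFL M \<phi> HL HR H" and H6: "H1to6 M H"
      and HL6: "H1to6 M HL" and HR6: "H1to6 M HR" and h8L: "H8 M \<tau> HL" and h8R: "H8 M \<tau> HR"
      and mu: "max (mu_star M HL) (mu_star M HR) < \<mu>"
      by auto
    obtain \<alpha>1 \<beta>1 \<alpha>2 \<beta>2 N where pos: "0 \<le> \<alpha>1" "0 \<le> \<beta>1" "0 \<le> \<alpha>2" "0 \<le> \<beta>2" and Nn: "N \<in> null_sets M"
      and ints: "\<forall>\<omega>\<in>space M. \<forall>a c. (\<lambda>s. bfun \<mu> HR s \<omega>) integrable_on {a..c} \<and> (\<lambda>s. bfun \<mu> (srefl HL) s \<omega>) integrable_on {a..c}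
       \<and> (\<lambda>s. bfun \<mu> (hrefl HL) s \<omega>) integrable_on {a..c} \<and> (\<lambda>s. bfun \<mu> (prefl HR) s \<omega>) integrable_on {a..c}"
      and lims: "\<forall>\<omega>\<in>space M - N.
       ((\<lambda>t. integral {0..t} (\<lambda>s. bfun \<mu> HR s \<omega>) / t) \<longlongrightarrow> \<alpha>1) at_top \<and>
       ((\<lambda>t. integral {0..t} (\<lambda>s. bfun \<mu> (srefl HL) s \<omega>) / t) \<longlongrightarrow> \<beta>1) at_top \<and>
       ((\<lambda>t. integral {0..t} (\<lambda>s. bfun \<mu> (hrefl HL) s \<omega>) / t) \<longlongrightarrow> \<alpha>2) at_top \<and>
       ((\<lambda>t. integral {0..t} (\<lambda>s. bfun \<mu> (prefl HR) s \<omega>) / t) \<longlongrightarrow> \<beta>2) at_top"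
      using ergs[OF P E HL6 HR6 h8L h8R, where mu=\<mu>] by blast
    have "AE \<omega> in M. Atilde HL \<omega> = mu_star M HL \<and> Atilde HR \<omega> = mu_star M HR"
      using mu_star_ae[OF P E HL6 h8L] mu_star_ae[OF P E HR6 h8R] by eventually_elim (intro conjI)
    then obtain N2 where N2: "{\<omega> \<in> space M. \<not> (Atilde HL \<omega> = mu_star M HL \<and> Atilde HR \<omega> = mu_star M HR)} \<subseteq> N2"
      "emeasure M N2 = 0" "N2 \<in> sets M"
      by (rule AE_E)
    have N2n: "N2 \<in> null_sets M" using N2 by (simp add: null_sets_def)
    have NN: "N \<union> N2 \<in> null_sets M" using Nn N2n by auto
    define \<Omega>0 where "\<Omega>0 = space M - (N \<union> N2)"
    have phi: "smooth \<phi>" "antimono \<phi>" "\<forall>y\<le>-1. \<phi> y = 1" "\<forall>y\<ge>1. \<phi> y = 0"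
      "\<forall>p y. \<forall>\<omega>\<in>space M. H p y \<omega> = \<phi> y * HL p y \<omega> + (1 - \<phi> y) * HR p y \<omega>"
      using h7 unfolding H7_WFL_def by blast+
    have conv: "((\<lambda>t. metric_fn \<mu> H (t * y) (t * x) \<omega> / t) \<longlongrightarrow> mbarf \<alpha>1 \<beta>1 \<alpha>2 \<beta>2 y x) at_top"
      if w: "\<omega> \<in> \<Omega>0" for \<omega> x y
    proof -
      have \<omega>: "\<omega> \<in> space M" using w by (auto simp: \<Omega>0_def)
      have \<omega>N: "\<omega> \<in> space M - N" using w by (auto simp: \<Omega>0_def)
      have AL: "Atilde HL \<omega> = mu_star M HL" and AR: "Atilde HR \<omega> = mu_star M HR"
        using w N2(1) by (auto simp: \<Omega>0_def)
      have sub: "\<forall>s. H 0 s \<omega> < \<mu>"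
      proof
        fix s
        have a: "HL 0 s \<omega> \<le> max (mu_star M HL) (mu_star M HR)"
          using Atilde_ge[OF HL6 \<omega>, of s] AL by simp
        have b: "HR 0 s \<omega> \<le> max (mu_star M HL) (mu_star M HR)"
          using Atilde_ge[OF HR6 \<omega>, of s] AR by simp
        have "\<phi> s * HL 0 s \<omega> + (1 - \<phi> s) * HR 0 s \<omega> < \<mu>"
          using convex_comb_less[OF _ _ a b mu] phi_range[OF phi(2,3,4), of s] by blast
        then show "H 0 s \<omega> < \<mu>" using phi(5) \<omega> by simp
      qed
      have K0: "(1::real) \<ge> 0" by simp
      have hR: "H p s \<omega> = HR p s \<omega>" if "s \<ge> 1" for s p using phi(4,5) \<omega> that by simp
      have hL: "H p s \<omega> = HL p s \<omega>" if "s \<le> - 1" for s p using phi(3,5) \<omega> that by simp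
      show ?thesis
        using conv_main[where Hf=H and HR=HR and HL=HL and \<omega>=\<omega> and mu=\<mu>, OF H6 \<omega> sub K0 hR hL] ints \<omega> lims \<omega>N by blast
    qed
    show "\<exists>\<Omega>0 :: 'a set. \<exists>mbar :: real \<Rightarrow> real \<Rightarrow> real.
        \<Omega>0 \<in> sets M \<and> measure M \<Omega>0 = 1 \<and>
        (\<forall>y x. mbar y x \<ge> 0) \<and>
        (\<forall>\<omega>\<in>\<Omega>0. \<forall>x y.
           ((\<lambda>t. metric_fn \<mu> H (t * y) (t * x) \<omega> / t) \<longlongrightarrow> mbar y x) at_top)"
    proof (intro exI[of _ \<Omega>0] exI[of _ "mbarf \<alpha>1 \<beta>1 \<alpha>2 \<beta>2"] conjI allI ballI)
      show "\<Omega>0 \<in> sets M" using NN by (auto simp: \<Omega>0_def)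
      show "measure M \<Omega>0 = 1" using measure_Diff_null_set[OF sets.top NN] prob_space by (simp add: \<Omega>0_def)
      fix y x show "0 \<le> mbarf \<alpha>1 \<beta>1 \<alpha>2 \<beta>2 y x" by (rule mbarf_nonneg[OF pos])
    next
      fix \<omega> x y assume "\<omega> \<in> \<Omega>0"
      then show "((\<lambda>t. metric_fn \<mu> H (t * y) (t * x) \<omega> / t) \<longlongrightarrow> mbarf \<alpha>1 \<beta>1 \<alpha>2 \<beta>2 y x) at_top"
        by (rule conv)
    qed
  }
qed


end
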